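(* Let $Z$ be a del Pezzo surface. (i) If $Z$ is not isomorphic to the blow-up of $\mathbb{P}^2$ in one or two points, then $O(Z)=\widehat{W}(Z)$. (ii) If $Z$ is isomorphic to the blow-up of $\mathbb{P}^2$ in two points, then $O(Z)=\widehat{W}(Z)\ltimes\mathbb{Z}$, a semidirect product of $\widehat W(Z)$ and an infinite cyclic group. (iii) If $Z$ is isomorphic to the blow-up of $\mathbb{P}^2$ in one point, then $\widehat{W}(Z)$ is trivial and $O(Z)\cong\mathbb{Z}$.
   Context: $Z$ is a smooth projective connected surface over $\mathbb{C}$ with ample $\omega_Z^{-1}$ (so $Z\cong\mathbb{P}^1\times\mathbb{P}^1$ or a blow-up of $\mathbb{P}^2$ at $0\le m\le 8$ general points); $K_Z=c_1(\omega_Z)$. $K(Z)$ is the Grothendieck group of the bounded derived category of coherent sheaves on $Z$, $r$ rank, $d(E)=c_1(E)\cdot(-K_Z)$, $\psi=(r,d):K(Z)\to\mathbb{Z}^2$, $\chi(E,F)=\sum_i(-1)^i\dim\mathrm{Hom}^i(E,F)$ the Euler form. $O(Z)$ is the group of automorphisms of $K(Z)$ preserving $\chi(-,-)$, $r$ and $d$. The affine roots are $\alpha\in\ker\psi$ with $\chi(\alpha,\alpha)=2$, and $\widehat{W}(Z)$ is the group generated by the reflections $\beta\mapsto\beta-\chi(\beta,\alpha)\alpha$ over affine roots $\alpha$. *)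

theory Defs
  imports "HOL-Algebra.Bij" "HOL-Algebra.Coset" "HOL-Algebra.Generated_Groups" "HOL-Algebra.Elementary_Groups"
begin

text \<open>Deformation types of del Pezzo surfaces: P1 x P1, or the blow-up of P2 in m points.
  The lattice K(Z) together with r, d and the Euler form only depends on this type.\<close>
datatype dP = P1xP1 | BlP2 nat

definition delPezzo :: "dP \<Rightarrow> bool" where
  "delPezzo Z \<longleftrightarrow> (case Z of P1xP1 \<Rightarrow> True | BlP2 m \<Rightarrow> m \<le> 8)"

text \<open>Rank of Pic(Z). For P1xP1 basis = the two fibre classes; for BlP2 m basis = H, E_1..E_m.\<close>
fun picrk :: "dP \<Rightarrow> nat" where
  "picrk P1xP1 = 2"
| "picrk (BlP2 m) = m + 1"

fun inter :: "dP \<Rightarrow> int list \<Rightarrow> int list \<Rightarrow> int" where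
  "inter P1xP1 D E = D!0 * E!1 + D!1 * E!0"
| "inter (BlP2 m) D E = D!0 * E!0 - (\<Sum>i\<in>{1..m}. D!i * E!i)"

fun antiK :: "dP \<Rightarrow> int list" where
  "antiK P1xP1 = [2, 2]"
| "antiK (BlP2 m) = 3 # replicate m (-1)"

text \<open>K(Z) is free with coordinates (rank, c_1, chi(O_Z,-)); E \<mapsto> (r(E), c_1(E), chi(O_Z,E))
  is an isomorphism K(Z) \<cong> Z \<oplus> Pic(Z) \<oplus> Z for a rational surface.\<close>
type_synonym kel = "int \<times> int list \<times> int"

definition KZ :: "dP \<Rightarrow> kel set" where
  "KZ Z = {(r, D, c). length D = picrk Z}"

definition kadd :: "kel \<Rightarrow> kel \<Rightarrow> kel" where
  "kadd x y = (case x of (r, D, c) \<Rightarrow> case y of (s, E, e) \<Rightarrow> (r + s, map2 (+) D E, c + e))"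

definition ksmul :: "int \<Rightarrow> kel \<Rightarrow> kel" where
  "ksmul k x = (case x of (r, D, c) \<Rightarrow> (k * r, map ((*) k) D, k * c))"

definition krk :: "kel \<Rightarrow> int" where
  "krk x = fst x"

definition kdeg :: "dP \<Rightarrow> kel \<Rightarrow> int" where
  "kdeg Z x = inter Z (fst (snd x)) (antiK Z)"

text \<open>Euler form via Riemann--Roch: with ch_2 = chi - r - d/2,
  chi(E,F) = r_E chi_F + r_F chi_E - r_E r_F - r_F d_E - c_1(E).c_1(F).\<close>
definition kchi :: "dP \<Rightarrow> kel \<Rightarrow> kel \<Rightarrow> int" where
  "kchi Z x y = (case x of (r, D, c) \<Rightarrow> case y of (s, E, e) \<Rightarrow>
      r * e + s * c - r * s - s * inter Z D (antiK Z) - inter Z D E)"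

abbreviation BG :: "dP \<Rightarrow> (kel \<Rightarrow> kel) monoid" where
  "BG Z \<equiv> BijGroup (KZ Z)"

definition Ocar :: "dP \<Rightarrow> (kel \<Rightarrow> kel) set" where
  "Ocar Z = {f \<in> Bij (KZ Z).
      (\<forall>x\<in>KZ Z. \<forall>y\<in>KZ Z. f (kadd x y) = kadd (f x) (f y)) \<and>
      (\<forall>x\<in>KZ Z. \<forall>y\<in>KZ Z. kchi Z (f x) (f y) = kchi Z x y) \<and>
      (\<forall>x\<in>KZ Z. krk (f x) = krk x \<and> kdeg Z (f x) = kdeg Z x)}"

definition OGrp :: "dP \<Rightarrow> (kel \<Rightarrow> kel) monoid" where
  "OGrp Z = (BG Z)\<lparr>carrier := Ocar Z\<rparr>"

definition affine_roots :: "dP \<Rightarrow> kel set" where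
  "affine_roots Z = {a \<in> KZ Z. krk a = 0 \<and> kdeg Z a = 0 \<and> kchi Z a a = 2}"

definition refl :: "dP \<Rightarrow> kel \<Rightarrow> kel \<Rightarrow> kel" where
  "refl Z a = restrict (\<lambda>b. kadd b (ksmul (- kchi Z b a) a)) (KZ Z)"

definition What :: "dP \<Rightarrow> (kel \<Rightarrow> kel) set" where
  "What Z = generate (BG Z) (refl Z ` affine_roots Z)"

end

theory Submission
  imports Defs
begin

lemma nth_map2': "i < length xs \<Longrightarrow> i < length ys \<Longrightarrow> map2 f xs ys ! i = f (xs!i) (ys!i)"
  by simp

lemma inter_add:
  assumes "length D = picrk Z" "length E = picrk Z"
  shows "inter Z (map2 (+) D E) F = inter Z D F + inter Z E F"
proof (cases Z)
  case P1xP1 then show ?thesis using assms by (simp add: algebra_simps)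
next
  case (BlP2 m)
  have "(\<Sum>i\<in>{1..m}. map2 (+) D E ! i * F ! i) = (\<Sum>i\<in>{1..m}. D ! i * F ! i) + (\<Sum>i\<in>{1..m}. E ! i * F ! i)"
    unfolding sum.distrib[symmetric] by (rule sum.cong) (use assms BlP2 in \<open>auto simp: algebra_simps\<close>)
  then show ?thesis using assms BlP2 by (simp add: algebra_simps)
qed

lemma inter_smul:
  assumes "length D = picrk Z"
  shows "inter Z (map ((*) k) D) F = k * inter Z D F"
proof (cases Z)
  case P1xP1 then show ?thesis using assms by (simp add: algebra_simps)
next
  case (BlP2 m)
  have "(\<Sum>i\<in>{1..m}. map ((*) k) D ! i * F ! i) = k * (\<Sum>i\<in>{1..m}. D ! i * F ! i)"
    unfolding sum_distrib_left by (rule sum.cong) (use assms BlP2 in \<open>auto simp: algebra_simps\<close>)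
  then show ?thesis using assms BlP2 by (simp add: algebra_simps)
qed

lemma inter_sym: "inter Z D E = inter Z E D"
  by (cases Z) (auto simp: algebra_simps)

lemma inter_zero: "n = picrk Z \<Longrightarrow> inter Z (replicate n 0) E = 0"
proof (cases Z)
  case (BlP2 m)
  assume "n = picrk Z"
  then show ?thesis using BlP2 by (auto intro!: sum.neutral simp del: replicate.simps)
qed auto

definition kO :: "dP \<Rightarrow> kel" where "kO Z = (1, replicate (picrk Z) 0, 1)"
definition kp :: "dP \<Rightarrow> kel" where "kp Z = (0, replicate (picrk Z) 0, 1)"
definition uvec :: "nat \<Rightarrow> nat \<Rightarrow> int list" where "uvec n i = map (\<lambda>j. if j = i then 1 else 0) [0..<n]"
definition kE :: "dP \<Rightarrow> nat \<Rightarrow> kel" where "kE Z i = (0, uvec (picrk Z) i, 0)"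

lemma KZ_iff: "(r,D,c) \<in> KZ Z \<longleftrightarrow> length D = picrk Z"
  by (simp add: KZ_def)

lemma KZ_E: "x \<in> KZ Z \<Longrightarrow> (\<And>r D c. x = (r,D,c) \<Longrightarrow> length D = picrk Z \<Longrightarrow> P) \<Longrightarrow> P"
  by (cases x) (auto simp: KZ_iff)

lemma kO_KZ[simp]: "kO Z \<in> KZ Z" and kp_KZ[simp]: "kp Z \<in> KZ Z" and kE_KZ[simp]: "kE Z i \<in> KZ Z"
  by (auto simp: kO_def kp_def kE_def uvec_def KZ_iff)

lemma kadd_simp[simp]: "kadd (r,D,c) (s,E,e) = (r+s, map2 (+) D E, c+e)"
  by (simp add: kadd_def)
lemma ksmul_simp[simp]: "ksmul k (r,D,c) = (k*r, map ((*) k) D, k*c)"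
  by (simp add: ksmul_def)
lemma kchi_simp: "kchi Z (r,D,c) (s,E,e) = r * e + s * c - r * s - s * inter Z D (antiK Z) - inter Z D E"
  by (simp add: kchi_def)
lemma krk_simp[simp]: "krk (r,D,c) = r" by (simp add: krk_def)
lemma kdeg_simp: "kdeg Z (r,D,c) = inter Z D (antiK Z)" by (simp add: kdeg_def)

lemma kadd_KZ[simp]: "x \<in> KZ Z \<Longrightarrow> y \<in> KZ Z \<Longrightarrow> kadd x y \<in> KZ Z"
  by (auto elim!: KZ_E simp: KZ_iff)
lemma ksmul_KZ[simp]: "x \<in> KZ Z \<Longrightarrow> ksmul k x \<in> KZ Z"
  by (auto elim!: KZ_E simp: KZ_iff)

lemma kchi_add_left: "x \<in> KZ Z \<Longrightarrow> y \<in> KZ Z \<Longrightarrow> kchi Z (kadd x y) z = kchi Z x z + kchi Z y z"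
  by (cases z) (auto elim!: KZ_E simp: kchi_simp inter_add algebra_simps)

lemma kchi_add_right: "y \<in> KZ Z \<Longrightarrow> z \<in> KZ Z \<Longrightarrow> kchi Z x (kadd y z) = kchi Z x y + kchi Z x z"
proof -
  assume a: "y \<in> KZ Z" "z \<in> KZ Z"
  obtain r D c where x: "x = (r,D,c)" by (cases x)
  from a obtain s E e t F f where y: "y = (s,E,e)" "length E = picrk Z" and z: "z = (t,F,f)" "length F = picrk Z"
    by (auto elim!: KZ_E)
  have "inter Z D (map2 (+) E F) = inter Z D E + inter Z D F"
    using inter_add[of E Z F D] y z by (simp add: inter_sym)
  then show ?thesis using x y z by (simp add: kchi_simp algebra_simps)
qed

lemma kchi_smul_left: "x \<in> KZ Z \<Longrightarrow> kchi Z (ksmul k x) z = k * kchi Z x z"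
  by (cases z) (auto elim!: KZ_E simp: kchi_simp inter_smul algebra_simps)

lemma kchi_smul_right: "y \<in> KZ Z \<Longrightarrow> kchi Z x (ksmul k y) = k * kchi Z x y"
proof -
  assume a: "y \<in> KZ Z"
  obtain r D c where x: "x = (r,D,c)" by (cases x)
  from a obtain s E e where y: "y = (s,E,e)" "length E = picrk Z"
    by (auto elim!: KZ_E)
  have "inter Z D (map ((*) k) E) = k * inter Z D E"
    using inter_smul[of E Z k D] y by (simp add: inter_sym)
  then show ?thesis using x y by (simp add: kchi_simp algebra_simps)
qed

lemma krk_add: "krk (kadd x y) = krk x + krk y"
  by (cases x; cases y) auto
lemma krk_smul: "krk (ksmul k x) = k * krk x"
  by (cases x) auto
lemma kdeg_add: "x \<in> KZ Z \<Longrightarrow> y \<in> KZ Z \<Longrightarrow> kdeg Z (kadd x y) = kdeg Z x + kdeg Z y"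
  by (auto elim!: KZ_E simp: kdeg_simp inter_add)
lemma kdeg_smul: "x \<in> KZ Z \<Longrightarrow> kdeg Z (ksmul k x) = k * kdeg Z x"
  by (auto elim!: KZ_E simp: kdeg_simp inter_smul)

lemma kchi_antisym: "kchi Z x y - kchi Z y x = krk x * kdeg Z y - krk y * kdeg Z x"
  by (cases x; cases y) (auto simp: kchi_simp kdeg_simp inter_sym algebra_simps)

lemma kchi_p_left: "kchi Z (kp Z) y = krk y"
  by (cases y) (simp add: kp_def kchi_simp inter_zero)
lemma kchi_p_right: "kchi Z y (kp Z) = krk y"
  by (cases y) (simp add: kp_def kchi_simp inter_zero inter_sym[of Z _ "replicate _ 0"])

lemma kchi_O_right: "kchi Z (r,D,c) (kO Z) = c - inter Z D (antiK Z)"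
  by (simp add: kO_def kchi_simp inter_zero inter_sym[of Z D])

lemma uvec_len[simp]: "length (uvec n i) = n" by (simp add: uvec_def)
lemma uvec_nth[simp]: "j < n \<Longrightarrow> uvec n i ! j = (if j = i then 1 else 0)" by (simp add: uvec_def)

lemma inter_uvec:
  assumes "i < picrk Z"
  shows "inter Z D (uvec (picrk Z) i) = (case Z of P1xP1 \<Rightarrow> D ! (1 - i) | BlP2 m \<Rightarrow> (if i = 0 then D!0 else - D!i))"
proof (cases Z)
  case P1xP1 then show ?thesis using assms by (auto simp: less_Suc_eq)
next
  case (BlP2 m)
  show ?thesis
  proof (cases "i = 0")
    case True then show ?thesis using BlP2 assms by (auto intro!: sum.neutral)
  next
    case False
    have "(\<Sum>j\<in>{1..m}. D ! j * uvec (Suc m) i ! j) = (\<Sum>j\<in>{1..m}. if j = i then D!i else 0)"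
      by (rule sum.cong) (auto)
    also have "\<dots> = D ! i" using False BlP2 assms by simp
    finally show ?thesis using BlP2 assms False by simp
  qed
qed

lemma kchi_E_right: "i < picrk Z \<Longrightarrow> kchi Z (r,D,c) (kE Z i) = - inter Z D (uvec (picrk Z) i)"
  by (simp add: kE_def kchi_simp)

lemma KZ_nondeg:
  assumes u: "u \<in> KZ Z" and v: "v \<in> KZ Z"
    and hp: "kchi Z u (kp Z) = kchi Z v (kp Z)" and hO: "kchi Z u (kO Z) = kchi Z v (kO Z)"
    and hE: "\<And>i. i < picrk Z \<Longrightarrow> kchi Z u (kE Z i) = kchi Z v (kE Z i)"
  shows "u = v"
proof -
  obtain r D c where u': "u = (r,D,c)" "length D = picrk Z" using u by (auto elim!: KZ_E)
  obtain s E e where v': "v = (s,E,e)" "length E = picrk Z" using v by (auto elim!: KZ_E)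
  have rs: "r = s" using hp u' v' by (simp add: kchi_p_right)
  have I: "inter Z D (uvec (picrk Z) i) = inter Z E (uvec (picrk Z) i)" if "i < picrk Z" for i
    using hE[OF that] u' v' that by (simp add: kchi_E_right)
  have DE: "D = E"
  proof (rule nth_equalityI)
    show "length D = length E" using u' v' by simp
    fix i assume i: "i < length D"
    show "D ! i = E ! i"
    proof (cases Z)
      case P1xP1
      then have "i < 2" using i u' by simp
      then have "1 - i < picrk Z" "1 - (1 - i) = i" using P1xP1 by auto
      then show ?thesis using I[of "1 - i"] P1xP1 inter_uvec[of "1 - i" Z] by auto
    next
      case (BlP2 m)
      then show ?thesis using I[of i] i u' inter_uvec[of i Z D] inter_uvec[of i Z E]
        by (auto split: if_splits)
    qed
  qed
  have "c = e" using hO u' v' DE by (simp add: kchi_O_right)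
  then show ?thesis using u' v' rs DE by simp
qed

lemma KZ_nondeg':
  assumes "u \<in> KZ Z" "v \<in> KZ Z" "\<And>t. t \<in> KZ Z \<Longrightarrow> kchi Z u t = kchi Z v t"
  shows "u = v"
proof (rule KZ_nondeg)
  show "kchi Z u (kp Z) = kchi Z v (kp Z)" by (rule assms(3)) simp
  show "kchi Z u (kO Z) = kchi Z v (kO Z)" by (rule assms(3)) simp
  show "kchi Z u (kE Z i) = kchi Z v (kE Z i)" for i by (rule assms(3)) simp
qed (use assms in blast)+

lemma Bij_facts:
  assumes "f \<in> Bij S" "x \<in> S"
  shows "f x \<in> S" "inv_into S f x \<in> S" "f (inv_into S f x) = x" "inv_into S f (f x) = x"
  using assms by (auto simp: Bij_def bij_betw_inv_into_right bij_betw_inv_into_left inv_into_into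
      dest: bij_betwE bij_betw_imp_surj_on)

lemma BG_carrier[simp]: "carrier (BG Z) = Bij (KZ Z)" by (simp add: BijGroup_def)
lemma BG_mult: "f \<in> Bij S \<Longrightarrow> g \<in> Bij S \<Longrightarrow> f \<otimes>\<^bsub>BijGroup S\<^esub> g = compose S f g"
  by (simp add: BijGroup_def)
lemma BG_mult_apply: "f \<in> Bij S \<Longrightarrow> g \<in> Bij S \<Longrightarrow> x \<in> S \<Longrightarrow> (f \<otimes>\<^bsub>BijGroup S\<^esub> g) x = f (g x)"
  by (simp add: BG_mult compose_def)
lemma BG_one: "\<one>\<^bsub>BijGroup S\<^esub> = (\<lambda>x\<in>S. x)" by (simp add: BijGroup_def)
lemma BG_inv_apply: "f \<in> Bij S \<Longrightarrow> x \<in> S \<Longrightarrow> (inv\<^bsub>BijGroup S\<^esub> f) x = inv_into S f x"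
  by (simp add: inv_BijGroup)

lemma Bij_eqI: "f \<in> Bij S \<Longrightarrow> g \<in> Bij S \<Longrightarrow> (\<And>x. x \<in> S \<Longrightarrow> f x = g x) \<Longrightarrow> f = g"
  by (rule extensionalityI[of _ S]) (auto simp: Bij_def)

lemma grpBG: "group (BG Z)" by (rule group_BijGroup)

lemma Ocar_D:
  assumes "f \<in> Ocar Z"
  shows "f \<in> Bij (KZ Z)" "\<And>x. x \<in> KZ Z \<Longrightarrow> f x \<in> KZ Z"
    "\<And>x y. x \<in> KZ Z \<Longrightarrow> y \<in> KZ Z \<Longrightarrow> f (kadd x y) = kadd (f x) (f y)"
    "\<And>x y. x \<in> KZ Z \<Longrightarrow> y \<in> KZ Z \<Longrightarrow> kchi Z (f x) (f y) = kchi Z x y"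
    "\<And>x. x \<in> KZ Z \<Longrightarrow> krk (f x) = krk x"
    "\<And>x. x \<in> KZ Z \<Longrightarrow> kdeg Z (f x) = kdeg Z x"
  using assms by (auto simp: Ocar_def Bij_facts)

lemma OcarI:
  assumes "f \<in> Bij (KZ Z)"
    "\<And>x y. x \<in> KZ Z \<Longrightarrow> y \<in> KZ Z \<Longrightarrow> f (kadd x y) = kadd (f x) (f y)"
    "\<And>x y. x \<in> KZ Z \<Longrightarrow> y \<in> KZ Z \<Longrightarrow> kchi Z (f x) (f y) = kchi Z x y"
    "\<And>x. x \<in> KZ Z \<Longrightarrow> krk (f x) = krk x"
    "\<And>x. x \<in> KZ Z \<Longrightarrow> kdeg Z (f x) = kdeg Z x"
  shows "f \<in> Ocar Z"
  using assms by (auto simp: Ocar_def)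

lemma Ocar_subgroup: "subgroup (Ocar Z) (BG Z)"
proof (rule subgroup.intro)
  show "Ocar Z \<subseteq> carrier (BG Z)" by (auto simp: Ocar_def)
next
  fix f g assume f: "f \<in> Ocar Z" and g: "g \<in> Ocar Z"
  note F = Ocar_D[OF f] and G = Ocar_D[OF g]
  show "f \<otimes>\<^bsub>BG Z\<^esub> g \<in> Ocar Z"
    by (rule OcarI) (auto simp: F G compose_Bij[OF F(1) G(1), unfolded compose_def] BG_mult compose_def)
next
  show "\<one>\<^bsub>BG Z\<^esub> \<in> Ocar Z"
    by (rule OcarI) (auto simp: BG_one id_Bij)
next
  fix f assume f: "f \<in> Ocar Z"
  note F = Ocar_D[OF f]
  have B: "inv\<^bsub>BG Z\<^esub> f \<in> Bij (KZ Z)" using F(1) by (simp add: inv_BijGroup restrict_inv_into_Bij)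
  have ap: "(inv\<^bsub>BG Z\<^esub> f) x = inv_into (KZ Z) f x" if "x \<in> KZ Z" for x
    using F(1) that by (simp add: BG_inv_apply)
  note bf = Bij_facts[OF F(1)]
  show "inv\<^bsub>BG Z\<^esub> f \<in> Ocar Z"
  proof (rule OcarI[OF B])
    fix x y assume x: "x \<in> KZ Z" and y: "y \<in> KZ Z"
    have "f (kadd (inv_into (KZ Z) f x) (inv_into (KZ Z) f y)) = kadd x y"
      using x y by (simp add: F(3) bf)
    then have "inv_into (KZ Z) f (kadd x y) = kadd (inv_into (KZ Z) f x) (inv_into (KZ Z) f y)"
      using x y bf by (metis kadd_KZ)
    then show "(inv\<^bsub>BG Z\<^esub> f) (kadd x y) = kadd ((inv\<^bsub>BG Z\<^esub> f) x) ((inv\<^bsub>BG Z\<^esub> f) y)"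
      using x y by (simp add: ap)
    show "kchi Z ((inv\<^bsub>BG Z\<^esub> f) x) ((inv\<^bsub>BG Z\<^esub> f) y) = kchi Z x y"
      using x y F(4)[of "inv_into (KZ Z) f x" "inv_into (KZ Z) f y"] by (simp add: ap bf)
  next
    fix x assume x: "x \<in> KZ Z"
    show "krk ((inv\<^bsub>BG Z\<^esub> f) x) = krk x"
      using x F(5)[of "inv_into (KZ Z) f x"] by (simp add: ap bf)
    show "kdeg Z ((inv\<^bsub>BG Z\<^esub> f) x) = kdeg Z x"
      using x F(6)[of "inv_into (KZ Z) f x"] by (simp add: ap bf)
  qed
qed

lemma Ocar_kp: assumes "f \<in> Ocar Z" shows "f (kp Z) = kp Z"
proof -
  note F = Ocar_D[OF assms] and bf = Bij_facts[OF Ocar_D(1)[OF assms]]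
  show ?thesis
  proof (rule KZ_nondeg')
    fix t assume t: "t \<in> KZ Z"
    have "kchi Z (f (kp Z)) t = kchi Z (f (kp Z)) (f (inv_into (KZ Z) f t))" using t bf by simp
    also have "\<dots> = krk (inv_into (KZ Z) f t)" using t bf F(4)[of "kp Z" "inv_into (KZ Z) f t"] by (simp add: kchi_p_left)
    also have "\<dots> = krk t" using F(5)[of "inv_into (KZ Z) f t"] t bf by simp
    finally show "kchi Z (f (kp Z)) t = kchi Z (kp Z) t" by (simp add: kchi_p_left)
  qed (use F in auto)
qed

lemma aroot_D: assumes "a \<in> affine_roots Z"
  shows "a \<in> KZ Z" "krk a = 0" "kdeg Z a = 0" "kchi Z a a = 2" "\<And>y. kchi Z a y = kchi Z y a"
proof -
  show 1: "a \<in> KZ Z" "krk a = 0" "kdeg Z a = 0" "kchi Z a a = 2" using assms by (simp_all add: affine_roots_def)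
  fix y
  have "kchi Z a y - kchi Z y a = krk a * kdeg Z y - krk y * kdeg Z a" by (rule kchi_antisym)
  then show "kchi Z a y = kchi Z y a" using 1 by simp
qed

lemma refl_apply: "x \<in> KZ Z \<Longrightarrow> refl Z a x = kadd x (ksmul (- kchi Z x a) a)"
  by (simp add: refl_def)

lemma refl_KZ: "a \<in> affine_roots Z \<Longrightarrow> x \<in> KZ Z \<Longrightarrow> refl Z a x \<in> KZ Z"
  using aroot_D by (simp add: refl_apply)

lemma refl_chi_left:
  assumes "a \<in> affine_roots Z" "x \<in> KZ Z"
  shows "kchi Z (refl Z a x) t = kchi Z x t - kchi Z x a * kchi Z a t"
proof -
  have a: "a \<in> KZ Z" using aroot_D(1)[OF assms(1)] .
  have "kchi Z (refl Z a x) t = kchi Z x t + kchi Z (ksmul (- kchi Z x a) a) t"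
    using assms(2) a by (simp add: refl_apply kchi_add_left)
  also have "\<dots> = kchi Z x t - kchi Z x a * kchi Z a t"
    using a by (simp add: kchi_smul_left)
  finally show ?thesis .
qed

lemma refl_chi_a:
  assumes "a \<in> affine_roots Z" "x \<in> KZ Z"
  shows "kchi Z (refl Z a x) a = - kchi Z x a"
  using refl_chi_left[OF assms, of a] aroot_D(4)[OF assms(1)] by simp

lemma refl_invol:
  assumes "a \<in> affine_roots Z" "x \<in> KZ Z"
  shows "refl Z a (refl Z a x) = x"
proof (rule KZ_nondeg')
  have rx: "refl Z a x \<in> KZ Z" using refl_KZ[OF assms] .
  then show "refl Z a (refl Z a x) \<in> KZ Z" using refl_KZ[OF assms(1)] by blast
  show "x \<in> KZ Z" by fact
  fix t assume "t \<in> KZ Z"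
  show "kchi Z (refl Z a (refl Z a x)) t = kchi Z x t"
    using refl_chi_left[OF assms(1) rx, of t] refl_chi_left[OF assms, of t] refl_chi_a[OF assms] by simp
qed

lemma refl_Bij: assumes "a \<in> affine_roots Z" shows "refl Z a \<in> Bij (KZ Z)"
proof -
  have "bij_betw (refl Z a) (KZ Z) (KZ Z)"
    by (rule bij_betw_byWitness[where f'="refl Z a"])
       (use assms refl_invol refl_KZ in blast)+
  then show ?thesis by (simp add: Bij_def refl_def)
qed

lemma refl_Ocar: assumes "a \<in> affine_roots Z" shows "refl Z a \<in> Ocar Z"
proof (rule OcarI[OF refl_Bij[OF assms]])
  note A = aroot_D[OF assms]
  fix x y assume x: "x \<in> KZ Z" and y: "y \<in> KZ Z"
  have rx: "refl Z a x \<in> KZ Z" and ry: "refl Z a y \<in> KZ Z" and xy: "kadd x y \<in> KZ Z"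
    using refl_KZ[OF assms] x y by auto
  show "refl Z a (kadd x y) = kadd (refl Z a x) (refl Z a y)"
  proof (rule KZ_nondeg')
    fix t assume "t \<in> KZ Z"
    show "kchi Z (refl Z a (kadd x y)) t = kchi Z (kadd (refl Z a x) (refl Z a y)) t"
      using refl_chi_left[OF assms xy, of t] refl_chi_left[OF assms x, of t] refl_chi_left[OF assms y, of t]
        kchi_add_left[OF rx ry, of t] kchi_add_left[OF x y, of t] kchi_add_left[OF x y, of a]
      by (simp add: algebra_simps)
  qed (use xy rx ry refl_KZ[OF assms] in auto)
  have "kchi Z (refl Z a x) (refl Z a y) = kchi Z x (refl Z a y) - kchi Z x a * kchi Z a (refl Z a y)"
    by (rule refl_chi_left[OF assms x])
  also have "kchi Z a (refl Z a y) = - kchi Z y a" using A(5)[of "refl Z a y"] refl_chi_a[OF assms y] by simp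
  also have "kchi Z x (refl Z a y) = kchi Z x y - kchi Z y a * kchi Z x a"
    using y A(1) by (simp add: refl_apply kchi_add_right kchi_smul_right)
  finally show "kchi Z (refl Z a x) (refl Z a y) = kchi Z x y" by (simp add: algebra_simps)
next
  note A = aroot_D[OF assms]
  fix x assume x: "x \<in> KZ Z"
  show "krk (refl Z a x) = krk x" using x A(2) by (simp add: refl_apply krk_add krk_smul)
  show "kdeg Z (refl Z a x) = kdeg Z x" using x A(1,3) by (simp add: refl_apply kdeg_add kdeg_smul)
qed

lemma What_sub_Ocar: "What Z \<subseteq> Ocar Z"
  unfolding What_def
  by (rule group.generate_subgroup_incl[OF grpBG _ Ocar_subgroup]) (auto intro: refl_Ocar)

lemma What_subgroup: "subgroup (What Z) (BG Z)"
  unfolding What_def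
  by (rule group.generate_is_subgroup[OF grpBG]) (auto intro: refl_Bij)

lemma refl_What: "a \<in> affine_roots Z \<Longrightarrow> refl Z a \<in> What Z"
  unfolding What_def by (auto intro: generate.incl)

definition reachO :: "dP \<Rightarrow> kel \<Rightarrow> bool" where
  "reachO Z u \<longleftrightarrow> (\<exists>w\<in>What Z. w u = kO Z)"

lemma reachO_kO: "reachO Z (kO Z)"
  unfolding reachO_def
proof (rule bexI[of _ "\<one>\<^bsub>BG Z\<^esub>"])
  show "\<one>\<^bsub>BG Z\<^esub> \<in> What Z" by (rule subgroup.one_closed[OF What_subgroup])
qed (simp add: BG_one)

lemma What_Bij: "w \<in> What Z \<Longrightarrow> w \<in> Bij (KZ Z)"
  using What_sub_Ocar Ocar_D(1) by blast

lemma reachO_step: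
  assumes "u \<in> KZ Z" "s \<in> What Z" "reachO Z (s u)"
  shows "reachO Z u"
proof -
  obtain w where w: "w \<in> What Z" "w (s u) = kO Z" using assms(3) unfolding reachO_def by blast
  have "(w \<otimes>\<^bsub>BG Z\<^esub> s) u = kO Z" using w assms What_Bij by (simp add: BG_mult_apply)
  moreover have "w \<otimes>\<^bsub>BG Z\<^esub> s \<in> What Z" using w assms by (simp add: subgroup.m_closed[OF What_subgroup])
  ultimately show ?thesis unfolding reachO_def by blast
qed

lemma aroot_I:
  assumes "length R = picrk Z" "inter Z R (antiK Z) = 0" "inter Z R R = -2"
  shows "(0, R, c) \<in> affine_roots Z"
  using assms by (simp add: affine_roots_def KZ_iff kdeg_simp kchi_simp)

lemma transl:
  assumes u: "(1,D,e) \<in> KZ Z" and R: "length R = picrk Z" "inter Z R (antiK Z) = 0" "inter Z R R = -2"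
  shows "\<exists>s\<in>What Z. \<exists>e'. s (1,D,e) = (1, map2 (+) D R, e')"
    and "\<exists>s\<in>What Z. \<exists>e'. s (1,D,e) = (1, map2 (+) D (map ((*) (-1)) R), e')"
proof -
  define c where "c = inter Z D R - 1"
  have a: "(0, R, c) \<in> affine_roots Z" using aroot_I[OF R] .
  have "kchi Z (1,D,e) (0,R,c) = -1" by (simp add: kchi_simp c_def)
  then have "refl Z (0,R,c) (1,D,e) = (1, map2 (+) D R, e + c)"
    using u by (simp add: refl_apply map_idI)
  then show "\<exists>s\<in>What Z. \<exists>e'. s (1,D,e) = (1, map2 (+) D R, e')"
    using refl_What[OF a] by blast
next
  define c where "c = inter Z D R + 1"
  have a: "(0, R, c) \<in> affine_roots Z" using aroot_I[OF R] .
  have "kchi Z (1,D,e) (0,R,c) = 1" by (simp add: kchi_simp c_def)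
  then have "refl Z (0,R,c) (1,D,e) = (1, map2 (+) D (map ((*) (-1)) R), e - c)"
    using u by (simp add: refl_apply)
  then show "\<exists>s\<in>What Z. \<exists>e'. s (1,D,e) = (1, map2 (+) D (map ((*) (-1)) R), e')"
    using refl_What[OF a] by blast
qed

lemma What_Ocar_facts:
  assumes "w \<in> What Z" "x \<in> KZ Z"
  shows "w x \<in> KZ Z" "krk (w x) = krk x" "kdeg Z (w x) = kdeg Z x" "kchi Z (w x) (w x) = kchi Z x x"
proof -
  have f: "w \<in> Ocar Z" using assms(1) What_sub_Ocar by blast
  show "w x \<in> KZ Z" "krk (w x) = krk x" "kdeg Z (w x) = kdeg Z x" "kchi Z (w x) (w x) = kchi Z x x"
    using Ocar_D[OF f] assms(2) by auto
qed

definition good_u :: "dP \<Rightarrow> kel \<Rightarrow> bool" where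
  "good_u Z u \<longleftrightarrow> u \<in> KZ Z \<and> krk u = 1 \<and> kdeg Z u = 0 \<and> kchi Z u u = 1"

lemma good_u_What: "good_u Z u \<Longrightarrow> w \<in> What Z \<Longrightarrow> good_u Z (w u)"
  unfolding good_u_def using What_Ocar_facts[of w Z u] by simp

lemma good_u_form: "good_u Z u \<Longrightarrow> \<exists>D e. u = (1,D,e) \<and> length D = picrk Z \<and> inter Z D (antiK Z) = 0"
  unfolding good_u_def by (cases u) (auto simp: KZ_iff kdeg_simp)

lemma good_u_zero:
  assumes "good_u Z (1,D,e)" "\<forall>i<picrk Z. D ! i = 0"
  shows "(1,D,e) = kO Z"
proof -
  have len: "length D = picrk Z" using assms(1) by (simp add: good_u_def KZ_iff)
  have D: "D = replicate (picrk Z) 0" using assms(2) len by (intro nth_equalityI) auto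
  then have "kchi Z (1,D,e) (1,D,e) = 2*e - 1" by (simp add: kchi_simp inter_zero)
  then have "e = 1" using assms(1) by (simp add: good_u_def)
  then show ?thesis using D by (simp add: kO_def)
qed

lemma reach_descent:
  fixes \<mu> :: "kel \<Rightarrow> nat"
  assumes "\<And>u. good_u Z u \<Longrightarrow> P u \<Longrightarrow> \<mu> u \<noteq> 0 \<Longrightarrow> \<exists>s\<in>What Z. P (s u) \<and> \<mu> (s u) < \<mu> u"
    and "\<And>u. good_u Z u \<Longrightarrow> P u \<Longrightarrow> \<mu> u = 0 \<Longrightarrow> reachO Z u"
  shows "good_u Z u \<Longrightarrow> P u \<Longrightarrow> reachO Z u"
proof (induction "\<mu> u" arbitrary: u rule: less_induct)
  case less
  show ?case
  proof (cases "\<mu> u = 0")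
    case True then show ?thesis using assms(2) less by blast
  next
    case False
    then obtain s where s: "s \<in> What Z" "P (s u)" "\<mu> (s u) < \<mu> u" using assms(1) less by blast
    have "reachO Z (s u)" using less(1)[OF s(3) good_u_What[OF less(2) s(1)] s(2)] .
    then show ?thesis using reachO_step[OF _ s(1)] less(2) by (auto simp: good_u_def)
  qed
qed

definition vec :: "nat \<Rightarrow> (nat \<Rightarrow> int) \<Rightarrow> int list" where
  "vec m g = map g [0..<Suc m]"

lemma vec_len[simp]: "length (vec m g) = Suc m" by (simp add: vec_def)
lemma vec_nth[simp]: "i \<le> m \<Longrightarrow> vec m g ! i = g i" by (simp add: vec_def nth_append less_Suc_eq_le)

lemma inter_Bl: "inter (BlP2 m) D E = D!0 * E!0 - (\<Sum>i\<in>{1..m}. D!i * E!i)" by simp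

lemma antiK_nth: "i \<le> m \<Longrightarrow> antiK (BlP2 m) ! i = (if i = 0 then 3 else -1)"
  by (cases i) (auto simp: nth_Cons')

lemma inter_antiK_Bl: "inter (BlP2 m) D (antiK (BlP2 m)) = 3 * D!0 + (\<Sum>i\<in>{1..m}. D!i)"
proof -
  have "(\<Sum>i\<in>{1..m}. D!i * antiK (BlP2 m) ! i) = (\<Sum>i\<in>{1..m}. - D!i)"
    by (rule sum.cong) (auto simp: antiK_nth)
  then show ?thesis by (simp add: sum_negf)
qed

lemma sum_delta_mult: "finite A \<Longrightarrow> (\<Sum>l\<in>A. (if l = i then 1 else 0) * (x l :: int)) = (if i \<in> A then x i else 0)"
  by (simp add: if_distrib[of "\<lambda>t. t * _"] cong: if_cong)

definition Rij :: "nat \<Rightarrow> nat \<Rightarrow> nat \<Rightarrow> int list" where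
  "Rij m i j = vec m (\<lambda>l. (if l = i then 1 else 0) - (if l = j then 1 else 0))"

definition Rt :: "nat \<Rightarrow> nat \<Rightarrow> nat \<Rightarrow> nat \<Rightarrow> int list" where
  "Rt m i j k = vec m (\<lambda>l. (if l = 0 then 1 else 0) - (if l = i then 1 else 0) - (if l = j then 1 else 0) - (if l = k then 1 else 0))"

lemma Rij_nth: "l \<le> m \<Longrightarrow> Rij m i j ! l = (if l = i then 1 else 0) - (if l = j then 1 else 0)"
  by (simp add: Rij_def)

lemma Rt_nth: "l \<le> m \<Longrightarrow> Rt m i j k ! l = (if l = 0 then 1 else 0) - (if l = i then 1 else 0) - (if l = j then 1 else 0) - (if l = k then 1 else 0)"
  by (simp add: Rt_def)

lemma sum_Rij: 
  assumes "i \<in> {1..m::nat}" "j \<in> {1..m}"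
  shows "(\<Sum>l\<in>{1..m}. ((if l = i then 1 else 0) - (if l = j then 1 else 0)) * (x l::int)) = x i - x j"
proof -
  have "(\<Sum>l\<in>{1..m}. ((if l = i then 1 else 0) - (if l = j then 1 else 0)) * (x l::int))
     = (\<Sum>l\<in>{1..m}. (if l = i then 1 else 0) * x l) - (\<Sum>l\<in>{1..m}. (if l = j then 1 else 0) * x l)"
    by (simp add: left_diff_distrib sum_subtractf)
  then show ?thesis using assms by (simp add: sum_delta_mult)
qed

lemma Rij_props:
  assumes "i \<in> {1..m}" "j \<in> {1..m}" "i \<noteq> j"
  shows "length (Rij m i j) = picrk (BlP2 m)" "inter (BlP2 m) (Rij m i j) (antiK (BlP2 m)) = 0"
    "inter (BlP2 m) (Rij m i j) (Rij m i j) = -2"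
    "\<And>D. length D = Suc m \<Longrightarrow> inter (BlP2 m) D (Rij m i j) = D!j - D!i"
proof -
  show "length (Rij m i j) = picrk (BlP2 m)" by (simp add: Rij_def)
  have "(\<Sum>l\<in>{1..m}. Rij m i j ! l) = (\<Sum>l\<in>{1..m}. ((if l = i then 1 else 0) - (if l = j then 1 else 0)) * 1)"
    by (rule sum.cong) (auto simp: Rij_def)
  also have "\<dots> = 0" using sum_Rij[OF assms(1,2), of "\<lambda>_. 1"] by simp
  finally show "inter (BlP2 m) (Rij m i j) (antiK (BlP2 m)) = 0"
    using assms inter_antiK_Bl[of m "Rij m i j"] by (simp add: Rij_nth)
  have "(\<Sum>l\<in>{1..m}. Rij m i j ! l * Rij m i j ! l) = (\<Sum>l\<in>{1..m}. ((if l = i then 1 else 0) - (if l = j then 1 else 0)) * ((if l = i then 1 else 0) - (if l = j then 1 else 0)))"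
    by (rule sum.cong) (auto simp: Rij_def)
  also have "\<dots> = 2" using sum_Rij[OF assms(1,2), of "\<lambda>l. (if l = i then 1 else 0) - (if l = j then 1 else 0)"] assms by simp
  finally show "inter (BlP2 m) (Rij m i j) (Rij m i j) = -2"
    using assms by (simp add: Rij_def)
  fix D :: "int list" assume "length D = Suc m"
  have "(\<Sum>l\<in>{1..m}. D ! l * Rij m i j ! l) = (\<Sum>l\<in>{1..m}. ((if l = i then 1 else 0) - (if l = j then 1 else 0)) * D!l)"
    by (rule sum.cong) (auto simp: Rij_def)
  also have "\<dots> = D!i - D!j" using sum_Rij[OF assms(1,2), of "\<lambda>l. D!l"] by simp
  finally show "inter (BlP2 m) D (Rij m i j) = D!j - D!i"
    using assms by (simp add: Rij_def)
qed


lemma sum_Rt: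
  assumes "i \<in> {1..m::nat}" "j \<in> {1..m}" "k \<in> {1..m}"
  shows "(\<Sum>l\<in>{1..m}. ((if l = 0 then 1 else 0) - (if l = i then 1 else 0) - (if l = j then 1 else 0) - (if l = k then 1 else 0)) * (x l::int)) = - x i - x j - x k"
proof -
  have "(\<Sum>l\<in>{1..m}. ((if l = 0 then 1 else 0) - (if l = i then 1 else 0) - (if l = j then 1 else 0) - (if l = k then 1 else 0)) * (x l::int))
     = (\<Sum>l\<in>{1..m}. (if l = 0 then 1 else 0) * x l) - (\<Sum>l\<in>{1..m}. (if l = i then 1 else 0) * x l) - (\<Sum>l\<in>{1..m}. (if l = j then 1 else 0) * x l) - (\<Sum>l\<in>{1..m}. (if l = k then 1 else 0) * x l)"
    by (simp add: left_diff_distrib sum_subtractf sum_negf)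
  then show ?thesis using assms by (simp add: sum_delta_mult)
qed

lemma Rt_props:
  assumes "i \<in> {1..m}" "j \<in> {1..m}" "k \<in> {1..m}" "i \<noteq> j" "i \<noteq> k" "j \<noteq> k"
  shows "length (Rt m i j k) = picrk (BlP2 m)" "inter (BlP2 m) (Rt m i j k) (antiK (BlP2 m)) = 0"
    "inter (BlP2 m) (Rt m i j k) (Rt m i j k) = -2"
    "\<And>D. length D = Suc m \<Longrightarrow> inter (BlP2 m) D (Rt m i j k) = D!0 + D!i + D!j + D!k"
    "Rt m i j k ! 0 = 1"
proof -
  let ?g = "\<lambda>l. (if l = 0 then 1 else 0) - (if l = i then 1 else 0) - (if l = j then 1 else 0) - (if l = k then 1 else (0::int))"
  show "length (Rt m i j k) = picrk (BlP2 m)" by (simp add: Rt_def)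
  show "Rt m i j k ! 0 = 1" using assms by (simp add: Rt_def)
  have "(\<Sum>l\<in>{1..m}. Rt m i j k ! l) = (\<Sum>l\<in>{1..m}. ?g l * 1)"
    by (rule sum.cong) (auto simp: Rt_def)
  also have "\<dots> = -3" using sum_Rt[OF assms(1,2,3), of "\<lambda>_. 1"] by simp
  finally show "inter (BlP2 m) (Rt m i j k) (antiK (BlP2 m)) = 0"
    using assms inter_antiK_Bl[of m "Rt m i j k"] by (simp add: Rt_nth)
  have "(\<Sum>l\<in>{1..m}. Rt m i j k ! l * Rt m i j k ! l) = (\<Sum>l\<in>{1..m}. ?g l * ?g l)"
    by (rule sum.cong) (auto simp: Rt_def)
  also have "\<dots> = 3" using sum_Rt[OF assms(1,2,3), of ?g] assms by simp
  finally show "inter (BlP2 m) (Rt m i j k) (Rt m i j k) = -2"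
    using assms by (simp add: Rt_def)
  fix D :: "int list" assume "length D = Suc m"
  have "(\<Sum>l\<in>{1..m}. D ! l * Rt m i j k ! l) = (\<Sum>l\<in>{1..m}. ?g l * D!l)"
    by (rule sum.cong) (auto simp: Rt_def)
  also have "\<dots> = - D!i - D!j - D!k" using sum_Rt[OF assms(1,2,3), of "\<lambda>l. D!l"] by simp
  finally show "inter (BlP2 m) D (Rt m i j k) = D!0 + D!i + D!j + D!k"
    using assms by (simp add: Rt_def)
qed

definition kD :: "kel \<Rightarrow> int list" where "kD u = fst (snd u)"

lemma kD_simp[simp]: "kD (r,D,c) = D" by (simp add: kD_def)

lemma transl_nth:
  assumes u: "(1,D,e) \<in> KZ Z" and R: "length R = picrk Z" "inter Z R (antiK Z) = 0" "inter Z R R = -2"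
  shows "\<exists>s\<in>What Z. kD (s (1,D,e)) = map2 (+) D R"
    and "\<exists>s\<in>What Z. kD (s (1,D,e)) = map2 (+) D (map ((*) (-1)) R)"
proof -
  show "\<exists>s\<in>What Z. kD (s (1,D,e)) = map2 (+) D R" using transl(1)[OF assms] by (metis kD_simp)
  show "\<exists>s\<in>What Z. kD (s (1,D,e)) = map2 (+) D (map ((*) (-1)) R)" using transl(2)[OF assms] by (metis kD_simp)
qed

lemma sum_nat_abs_remove:
  assumes "finite A" "j \<in> A" "\<And>l. l \<in> A \<Longrightarrow> l \<noteq> j \<Longrightarrow> f l = g l" "nat \<bar>f j\<bar> < nat \<bar>g j\<bar>"
  shows "(\<Sum>l\<in>A. nat \<bar>f l\<bar>) < (\<Sum>l\<in>A. nat \<bar>g l\<bar>)"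
proof -
  have "(\<Sum>l\<in>A. nat \<bar>f l\<bar>) = nat \<bar>f j\<bar> + (\<Sum>l\<in>A - {j}. nat \<bar>f l\<bar>)" using assms(1,2) by (simp add: sum.remove)
  moreover have "(\<Sum>l\<in>A. nat \<bar>g l\<bar>) = nat \<bar>g j\<bar> + (\<Sum>l\<in>A - {j}. nat \<bar>g l\<bar>)" using assms(1,2) by (simp add: sum.remove)
  moreover have "(\<Sum>l\<in>A - {j}. nat \<bar>f l\<bar>) = (\<Sum>l\<in>A - {j}. nat \<bar>g l\<bar>)" using assms(3) by (intro sum.cong) auto
  ultimately show ?thesis using assms(4) by simp
qed

lemma good_u_Bl: "good_u (BlP2 m) u \<Longrightarrow> \<exists>D e. u = (1,D,e) \<and> length D = Suc m \<and> 3 * D!0 + (\<Sum>i\<in>{1..m}. D!i) = 0"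
proof -
  assume g: "good_u (BlP2 m) u"
  obtain D e where "u = (1,D,e)" "length D = picrk (BlP2 m)" "inter (BlP2 m) D (antiK (BlP2 m)) = 0"
    using good_u_form[OF g] by blast
  then show ?thesis using inter_antiK_Bl[of m D] by auto
qed

lemma stepA_phase2:
  assumes "good_u (BlP2 m) u" "kD u ! 0 = 0" shows "reachO (BlP2 m) u"
proof (rule reach_descent[where P="\<lambda>u. kD u ! 0 = 0" and \<mu>="\<lambda>u. \<Sum>j\<in>{2..m}. nat \<bar>kD u ! j\<bar>"])
  fix u assume g: "good_u (BlP2 m) u" and P: "kD u ! 0 = 0" and mu: "(\<Sum>j\<in>{2..m}. nat \<bar>kD u ! j\<bar>) \<noteq> 0"
  obtain D e where u: "u = (1,D,e)" "length D = Suc m" using good_u_Bl[OF g] by blast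
  have uK: "(1,D,e) \<in> KZ (BlP2 m)" using g u by (simp add: good_u_def)
  have "\<exists>j\<in>{2..m}. D!j \<noteq> 0"
  proof (rule ccontr)
    assume "\<not> ?thesis"
    then have "(\<Sum>j\<in>{2..m}. nat \<bar>kD u ! j\<bar>) = 0" using u by simp
    with mu show False by simp
  qed
  then obtain j where j: "j \<in> {2..m}" "D!j \<noteq> 0" by blast
  have j1: "1 \<in> {1..m}" "j \<in> {1..m}" "1 \<noteq> j" using j by auto
  note RP = Rij_props[OF j1]
  have len2: "length (map2 (+) D (Rij m 1 j)) = Suc m" "length (map2 (+) D (map ((*) (-1)) (Rij m 1 j))) = Suc m"
    using u RP(1) by simp_all
  show "\<exists>s\<in>What (BlP2 m). kD (s u) ! 0 = 0 \<and> (\<Sum>j\<in>{2..m}. nat \<bar>kD (s u) ! j\<bar>) < (\<Sum>j\<in>{2..m}. nat \<bar>kD u ! j\<bar>)"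
  proof (cases "D!j > 0")
    case True
    obtain s where s: "s \<in> What (BlP2 m)" "kD (s (1,D,e)) = map2 (+) D (Rij m 1 j)"
      using transl_nth(1)[OF uK RP(1-3)] by blast
    have nth: "kD (s u) ! l = D!l + ((if l = 1 then 1 else 0) - (if l = j then 1 else 0))" if "l \<le> m" for l
      using s u that RP(1) by (simp add: Rij_nth)
    show ?thesis
    proof (rule bexI[OF _ s(1)], intro conjI)
      show "kD (s u) ! 0 = 0" using nth[of 0] P u j by simp
      show "(\<Sum>j\<in>{2..m}. nat \<bar>kD (s u) ! j\<bar>) < (\<Sum>j\<in>{2..m}. nat \<bar>kD u ! j\<bar>)"
        by (rule sum_nat_abs_remove[OF _ j(1)]) (use nth j True u in auto)
    qed
  next
    case False
    obtain s where s: "s \<in> What (BlP2 m)" "kD (s (1,D,e)) = map2 (+) D (map ((*) (-1)) (Rij m 1 j))"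
      using transl_nth(2)[OF uK RP(1-3)] by blast
    have nth: "kD (s u) ! l = D!l - ((if l = 1 then 1 else 0) - (if l = j then 1 else 0))" if "l \<le> m" for l
      using s u that RP(1) by (simp add: Rij_nth)
    show ?thesis
    proof (rule bexI[OF _ s(1)], intro conjI)
      show "kD (s u) ! 0 = 0" using nth[of 0] P u j by simp
      show "(\<Sum>j\<in>{2..m}. nat \<bar>kD (s u) ! j\<bar>) < (\<Sum>j\<in>{2..m}. nat \<bar>kD u ! j\<bar>)"
        by (rule sum_nat_abs_remove[OF _ j(1)]) (use nth j False u in auto)
    qed
  qed
next
  fix u assume g: "good_u (BlP2 m) u" and P: "kD u ! 0 = 0" and mu: "(\<Sum>j\<in>{2..m}. nat \<bar>kD u ! j\<bar>) = 0"
  obtain D e where u: "u = (1,D,e)" "length D = Suc m" "3 * D!0 + (\<Sum>i\<in>{1..m}. D!i) = 0" using good_u_Bl[OF g] by blast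
  have z2: "D!j = 0" if "j \<in> {2..m}" for j using mu u that by simp
  have z1: "D!1 = 0" if "1 \<le> m"
  proof -
    have "{1..m} = insert 1 {2..m}" using that by auto
    then have "(\<Sum>i\<in>{1..m}. D!i) = D!1 + (\<Sum>i\<in>{2..m}. D!i)" by simp
    also have "(\<Sum>i\<in>{2..m}. D!i) = 0" using z2 by simp
    finally show ?thesis using u P by simp
  qed
  have "\<forall>i<picrk (BlP2 m). D ! i = 0"
  proof (intro allI impI)
    fix i assume "i < picrk (BlP2 m)"
    then have "i \<le> m" by simp
    then consider "i = 0" | "i = 1" | "i \<in> {2..m}" by force
    then show "D!i = 0" using P u z1 z2 \<open>i \<le> m\<close> by cases auto
  qed
  then have "u = kO (BlP2 m)" using good_u_zero[of "BlP2 m" D e] g u by simp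
  then show "reachO (BlP2 m) u" by (simp add: reachO_kO)
qed (use assms in auto)

lemma stepA_Bl:
  assumes "good_u (BlP2 m) u" "3 \<le> m \<or> kD u ! 0 = 0" shows "reachO (BlP2 m) u"
proof (cases "kD u ! 0 = 0")
  case True then show ?thesis using stepA_phase2 assms by blast
next
  case False
  then have m3: "3 \<le> m" using assms by blast
  have j1: "(1::nat) \<in> {1..m}" "2 \<in> {1..m}" "3 \<in> {1..m}" "(1::nat) \<noteq> 2" "(1::nat) \<noteq> 3" "(2::nat) \<noteq> 3" using m3 by auto
  note RP = Rt_props[OF j1]
  show ?thesis
  proof (rule reach_descent[where P="\<lambda>u. True" and \<mu>="\<lambda>u. nat \<bar>kD u ! 0\<bar>"])
    fix u assume g: "good_u (BlP2 m) u" and mu: "nat \<bar>kD u ! 0\<bar> \<noteq> 0"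
    obtain D e where u: "u = (1,D,e)" "length D = Suc m" using good_u_Bl[OF g] by blast
    have uK: "(1,D,e) \<in> KZ (BlP2 m)" using g u by (simp add: good_u_def)
    show "\<exists>s\<in>What (BlP2 m). True \<and> nat \<bar>kD (s u) ! 0\<bar> < nat \<bar>kD u ! 0\<bar>"
    proof (cases "D!0 > 0")
      case True
      obtain s where s: "s \<in> What (BlP2 m)" "kD (s (1,D,e)) = map2 (+) D (map ((*) (-1)) (Rt m 1 2 3))"
        using transl_nth(2)[OF uK RP(1-3)] by blast
      have "kD (s u) ! 0 = D!0 - 1" using s u RP(1,5) by simp
      then have "nat \<bar>kD (s u) ! 0\<bar> < nat \<bar>kD u ! 0\<bar>" using True u by simp
      then show ?thesis using s(1) by blast
    next
      case False
      obtain s where s: "s \<in> What (BlP2 m)" "kD (s (1,D,e)) = map2 (+) D (Rt m 1 2 3)"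
        using transl_nth(1)[OF uK RP(1-3)] by blast
      have "kD (s u) ! 0 = D!0 + 1" using s u RP(1,5) by simp
      then have "nat \<bar>kD (s u) ! 0\<bar> < nat \<bar>kD u ! 0\<bar>" using False u mu by simp
      then show ?thesis using s(1) by blast
    qed
  next
    fix u assume g: "good_u (BlP2 m) u" and mu: "nat \<bar>kD u ! 0\<bar> = 0"
    then show "reachO (BlP2 m) u" using stepA_phase2 by simp
  qed (use assms in auto)
qed

lemma stepA_P1:
  assumes "good_u P1xP1 u" shows "reachO P1xP1 u"
proof (rule reach_descent[where P="\<lambda>u. True" and \<mu>="\<lambda>u. nat \<bar>kD u ! 0\<bar>"])
  have RP: "length [1,-1] = picrk P1xP1" "inter P1xP1 [1,-1] (antiK P1xP1) = 0" "inter P1xP1 [1,-1] [1,-1] = -2"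
    by simp_all
  fix u assume g: "good_u P1xP1 u" and mu: "nat \<bar>kD u ! 0\<bar> \<noteq> 0"
  obtain D e where u: "u = (1,D,e)" "length D = 2" using good_u_form[OF g] by auto
  have uK: "(1,D,e) \<in> KZ P1xP1" using g u by (simp add: good_u_def)
  show "\<exists>s\<in>What P1xP1. True \<and> nat \<bar>kD (s u) ! 0\<bar> < nat \<bar>kD u ! 0\<bar>"
  proof (cases "D!0 > 0")
    case True
    obtain s where s: "s \<in> What P1xP1" "kD (s (1,D,e)) = map2 (+) D (map ((*) (-1)) [1,-1])"
      using transl_nth(2)[OF uK RP] by blast
    have "kD (s u) ! 0 = D!0 - 1" using s u by simp
    then have "nat \<bar>kD (s u) ! 0\<bar> < nat \<bar>kD u ! 0\<bar>" using True u by simp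
    then show ?thesis using s(1) by blast
  next
    case False
    obtain s where s: "s \<in> What P1xP1" "kD (s (1,D,e)) = map2 (+) D [1,-1]"
      using transl_nth(1)[OF uK RP] by blast
    have "kD (s u) ! 0 = D!0 + 1" using s u by simp
    then have "nat \<bar>kD (s u) ! 0\<bar> < nat \<bar>kD u ! 0\<bar>" using False u mu by simp
    then show ?thesis using s(1) by blast
  qed
next
  fix u assume g: "good_u P1xP1 u" and mu: "nat \<bar>kD u ! 0\<bar> = 0"
  obtain D e where u: "u = (1,D,e)" "length D = 2" "inter P1xP1 D (antiK P1xP1) = 0" using good_u_form[OF g] by auto
  have "\<forall>i<picrk P1xP1. D ! i = 0" using u mu by (auto simp: less_Suc_eq numeral_2_eq_2)
  then have "u = kO P1xP1" using good_u_zero[of P1xP1 D e] g u by simp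
  then show "reachO P1xP1 u" by (simp add: reachO_kO)
qed (use assms in auto)

lemma cauchy_schwarz_int:
  fixes x :: "'a \<Rightarrow> int"
  assumes "finite A"
  shows "(\<Sum>i\<in>A. x i)^2 \<le> int (card A) * (\<Sum>i\<in>A. (x i)^2)"
proof -
  have "0 \<le> (\<Sum>i\<in>A. \<Sum>j\<in>A. (x i - x j)^2)" by (intro sum_nonneg) auto
  also have "(\<Sum>i\<in>A. \<Sum>j\<in>A. (x i - x j)^2) = (\<Sum>i\<in>A. \<Sum>j\<in>A. (x i)^2 + (x j)^2 - 2 * x i * x j)"
    by (intro sum.cong refl) (simp add: power2_diff)
  also have "\<dots> = (\<Sum>i\<in>A. \<Sum>j\<in>A. (x i)^2) + (\<Sum>i\<in>A. \<Sum>j\<in>A. (x j)^2) - 2 * (\<Sum>i\<in>A. \<Sum>j\<in>A. x i * x j)"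
    by (simp only: sum_subtractf sum.distrib sum_distrib_left mult.assoc)
  also have "(\<Sum>i\<in>A. \<Sum>j\<in>A. (x i)^2) = int (card A) * (\<Sum>i\<in>A. (x i)^2)"
    by (simp add: sum_distrib_left mult.commute)
  also have "(\<Sum>i\<in>A. \<Sum>j\<in>A. (x j)^2) = int (card A) * (\<Sum>i\<in>A. (x i)^2)"
    by simp
  also have "(\<Sum>i\<in>A. \<Sum>j\<in>A. x i * x j) = (\<Sum>i\<in>A. x i)^2"
    by (simp add: power2_eq_square sum_product)
  finally show ?thesis by linarith
qed

lemma sum_le_sum_sq_int: "(\<Sum>i\<in>A. (x i::int)) \<le> (\<Sum>i\<in>A. (x i)^2)"
proof (cases "finite A")
  case True
  have "x i \<le> (x i)^2" for i
  proof (cases "x i \<le> 0")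
    case True then show ?thesis by (smt (verit) zero_le_power2)
  next
    case False then have "x i * 1 \<le> x i * x i" by (intro mult_left_mono) auto
    then show ?thesis by (simp add: power2_eq_square)
  qed
  then show ?thesis by (intro sum_mono) auto
qed simp

lemma exceptional_nonneg:
  fixes b :: "nat \<Rightarrow> int"
  assumes m: "m \<le> 8" and q: "a^2 - (\<Sum>i\<in>{1..m}. (b i)^2) = -1" and l: "3 * a + (\<Sum>i\<in>{1..m}. b i) = 1"
  shows "a \<ge> 0"
proof (rule ccontr)
  assume "\<not> a \<ge> 0"
  then have a: "a \<le> -1" by simp
  have cs: "(\<Sum>i\<in>{1..m}. b i)^2 \<le> int m * (\<Sum>i\<in>{1..m}. (b i)^2)"
    using cauchy_schwarz_int[of "{1..m}" b] by simp
  have Q: "(\<Sum>i\<in>{1..m}. (b i)^2) = a^2 + 1" using q by simp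
  have S: "(\<Sum>i\<in>{1..m}. b i) = 1 - 3 * a" using l by simp
  have "(1 - 3*a)^2 \<le> 8 * (a^2 + 1)"
  proof -
    have "(1 - 3*a)^2 \<le> int m * (a^2 + 1)" using cs Q S by simp
    also have "\<dots> \<le> 8 * (a^2 + 1)" using m by (intro mult_right_mono) (auto)
    finally show ?thesis .
  qed
  then have "(a - 7) * (a + 1) \<le> 0" by (simp add: power2_eq_square algebra_simps)
  then have "a = -1" using a by (smt (verit) mult_le_0_iff)
  then have "(\<Sum>i\<in>{1..m}. b i) = 4" "(\<Sum>i\<in>{1..m}. (b i)^2) = 2" using S Q by auto
  then show False using sum_le_sum_sq_int[of b "{1..m}"] by simp
qed

lemma sum3:
  assumes "i \<noteq> j" "i \<noteq> k" "j \<noteq> k" "{i,j,k} \<subseteq> A" "finite A"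
  shows "(\<Sum>l\<in>A. f l) = f i + f j + f k + (\<Sum>l\<in>A - {i,j,k}. (f l :: int))"
proof -
  have "(\<Sum>l\<in>A. f l) = (\<Sum>l\<in>{i,j,k}. f l) + (\<Sum>l\<in>A - {i,j,k}. f l)"
    using assms by (metis sum.subset_diff add.commute finite_subset)
  then show ?thesis using assms by simp
qed

lemma noether:
  fixes c :: "nat \<Rightarrow> int"
  assumes m: "m \<le> 8" and nn: "\<And>i. i \<in> {1..m} \<Longrightarrow> c i \<ge> 0"
    and q: "a^2 - (\<Sum>i\<in>{1..m}. (c i)^2) = 1" and l: "3 * a - (\<Sum>i\<in>{1..m}. c i) = 3"
  shows "a \<ge> 1" and "a \<ge> 2 \<Longrightarrow> \<exists>i j k. i \<in> {1..m} \<and> j \<in> {1..m} \<and> k \<in> {1..m} \<and> i \<noteq> j \<and> i \<noteq> k \<and> j \<noteq> k \<and> c i + c j + c k > a"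
proof -
  have S: "(\<Sum>i\<in>{1..m}. c i) = 3 * a - 3" using l by simp
  have Q: "(\<Sum>i\<in>{1..m}. (c i)^2) = a^2 - 1" using q by simp
  have "(\<Sum>i\<in>{1..m}. c i) \<ge> 0" using nn by (intro sum_nonneg) auto
  then show a1: "a \<ge> 1" using S by simp
  assume a2: "a \<ge> 2"
  have m3: "m \<ge> 3"
  proof (rule ccontr)
    assume "\<not> m \<ge> 3"
    then have m2: "int m \<le> 2" by simp
    have a21: "a^2 - 1 \<ge> 0" using a1 by (smt (verit) one_le_power power2_eq_square)
    have "(3*a - 3)^2 \<le> int m * (a^2 - 1)" using cauchy_schwarz_int[of "{1..m}" c] S Q by simp
    also have "\<dots> \<le> 2 * (a^2 - 1)" using m2 a21 by (intro mult_right_mono) auto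
    finally have "(a - 1) * (7 * a - 11) \<le> 0" by (simp add: power2_eq_square algebra_simps)
    moreover have "a - 1 > 0" "7 * a - 11 > 0" using a2 by auto
    ultimately show False by (simp add: mult_le_0_iff)
  qed
  define T where "T = {(i,j,k). i \<in> {1..m} \<and> j \<in> {1..m} \<and> k \<in> {1..m} \<and> i \<noteq> j \<and> i \<noteq> k \<and> j \<noteq> k}"
  define \<sigma> where "\<sigma> = (\<lambda>(i,j,k). c i + c j + c k)"
  have fT: "finite T"
    by (rule finite_subset[of _ "{1..m} \<times> {1..m} \<times> {1..m}"]) (auto simp: T_def)
  have neT: "(1,2,3) \<in> T" using m3 by (auto simp: T_def)
  obtain t where t: "t \<in> T" "\<And>t'. t' \<in> T \<Longrightarrow> \<sigma> t' \<le> \<sigma> t"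
  proof -
    have "Max (\<sigma> ` T) \<in> \<sigma> ` T" using fT neT by (intro Max_in) auto
    then obtain t where "t \<in> T" "\<sigma> t = Max (\<sigma> ` T)" by auto
    moreover have "\<sigma> t' \<le> Max (\<sigma> ` T)" if "t' \<in> T" for t' using fT that by (intro Max_ge) auto
    ultimately show ?thesis using that by metis
  qed
  obtain i j k where ijk: "t = (i,j,k)" by (cases t) auto
  have D: "i \<in> {1..m}" "j \<in> {1..m}" "k \<in> {1..m}" "i \<noteq> j" "i \<noteq> k" "j \<noteq> k" using t(1) ijk by (auto simp: T_def)
  show "\<exists>i j k. i \<in> {1..m} \<and> j \<in> {1..m} \<and> k \<in> {1..m} \<and> i \<noteq> j \<and> i \<noteq> k \<and> j \<noteq> k \<and> c i + c j + c k > a"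
  proof (rule ccontr)
    assume "\<not> (\<exists>i j k. i \<in> {1..m} \<and> j \<in> {1..m} \<and> k \<in> {1..m} \<and> i \<noteq> j \<and> i \<noteq> k \<and> j \<noteq> k \<and> c i + c j + c k > a)"
    then have s: "c i + c j + c k \<le> a" using D by (meson not_less)
    define \<mu> where "\<mu> = min (c i) (min (c j) (c k))"
    have mu: "\<mu> \<le> c i" "\<mu> \<le> c j" "\<mu> \<le> c k" "\<mu> \<ge> 0" using nn D by (auto simp: \<mu>_def)
    have rest: "c l \<le> \<mu>" if "l \<in> {1..m} - {i,j,k}" for l
    proof -
      have "(l,j,k) \<in> T" "(i,l,k) \<in> T" "(i,j,l) \<in> T" using that D by (auto simp: T_def)
      then have "\<sigma> (l,j,k) \<le> \<sigma> t" "\<sigma> (i,l,k) \<le> \<sigma> t" "\<sigma> (i,j,l) \<le> \<sigma> t" using t(2) by auto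
      then show ?thesis using ijk by (auto simp: \<sigma>_def \<mu>_def)
    qed
    let ?R = "{1..m} - {i,j,k}"
    have sub: "{i,j,k} \<subseteq> {1..m}" using D by auto
    have S': "(\<Sum>l\<in>{1..m}. c l) = c i + c j + c k + (\<Sum>l\<in>?R. c l)" by (rule sum3) (use D sub in auto)
    have Q': "(\<Sum>l\<in>{1..m}. (c l)^2) = (c i)^2 + (c j)^2 + (c k)^2 + (\<Sum>l\<in>?R. (c l)^2)" by (rule sum3) (use D sub in auto)
    have "(\<Sum>l\<in>?R. (c l)^2) \<le> (\<Sum>l\<in>?R. \<mu> * c l)"
    proof (rule sum_mono)
      fix l assume "l \<in> ?R"
      then have "0 \<le> c l" "c l \<le> \<mu>" using nn rest by auto
      then show "(c l)^2 \<le> \<mu> * c l" by (simp add: power2_eq_square mult_right_mono)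
    qed
    then have R2: "(\<Sum>l\<in>?R. (c l)^2) \<le> \<mu> * (\<Sum>l\<in>?R. c l)" by (simp add: sum_distrib_left)
    have sq: "(c x)^2 \<le> a * (c x - \<mu>) + \<mu> * c x" if "c x \<le> a" "\<mu> \<le> c x" "0 \<le> c x" for x
    proof -
      have "c x * (c x - \<mu>) \<le> a * (c x - \<mu>)" using that by (intro mult_right_mono) auto
      then show ?thesis by (simp add: power2_eq_square algebra_simps)
    qed
    have ci: "c i \<le> a" "c j \<le> a" "c k \<le> a" using s nn D by (smt (verit))+
    have "a^2 - 1 \<le> a * (c i + c j + c k - 3*\<mu>) + \<mu> * (c i + c j + c k) + \<mu> * (\<Sum>l\<in>?R. c l)"
    proof -
      have e1: "a * (c i + c j + c k - 3*\<mu>) = a*(c i - \<mu>) + a*(c j - \<mu>) + a*(c k - \<mu>)" by (simp add: algebra_simps)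
      have e2: "\<mu> * (c i + c j + c k) = \<mu> * c i + \<mu> * c j + \<mu> * c k" by (simp add: algebra_simps)
      show ?thesis using Q Q' R2 sq[OF ci(1) mu(1) nn[OF D(1)]] sq[OF ci(2) mu(2) nn[OF D(2)]] sq[OF ci(3) mu(3) nn[OF D(3)]] e1 e2 by linarith
    qed
    also have "\<dots> = a * (c i + c j + c k) - 3 * \<mu>"
    proof -
      have sR: "(\<Sum>l\<in>?R. c l) = 3*a - 3 - (c i + c j + c k)" using S S' by linarith
      show ?thesis unfolding sR by algebra
    qed
    also have "\<dots> \<le> a * a - 3 * \<mu>" using s a1 by (simp add: mult_left_mono)
    finally have "3 * \<mu> \<le> 1" by (simp add: power2_eq_square)
    then have "\<mu> = 0" using mu by simp
    then have "(\<Sum>l\<in>?R. c l) = 0" using rest nn by (intro sum.neutral) (smt (verit) DiffD1)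
    then have "3 * a - 3 \<le> a" using S S' s by simp
    then show False using a2 by simp
  qed
qed

lemma unit_sq_sum:
  fixes x :: "nat \<Rightarrow> int"
  assumes "finite A" "(\<Sum>l\<in>A. (x l)^2) = 1" "(\<Sum>l\<in>A. x l) = 1"
  shows "\<exists>l\<in>A. x l = 1 \<and> (\<forall>l'\<in>A. l' \<noteq> l \<longrightarrow> x l' = 0)"
proof -
  have "\<exists>l\<in>A. x l \<noteq> 0"
  proof (rule ccontr)
    assume "\<not> ?thesis" then have "(\<Sum>l\<in>A. (x l)^2) = 0" by simp
    with assms(2) show False by simp
  qed
  then obtain l where l: "l \<in> A" "x l \<noteq> 0" by blast
  have split2: "(\<Sum>l\<in>A. (x l)^2) = (x l)^2 + (\<Sum>l'\<in>A - {l}. (x l')^2)" using assms(1) l(1) by (simp add: sum.remove)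
  have nn: "(\<Sum>l'\<in>A - {l}. (x l')^2) \<ge> 0" by (intro sum_nonneg) auto
  have "(x l)^2 \<ge> 1" using l(2) by (smt (verit) power2_less_eq_zero_iff zero_le_power2 int_one_le_iff_zero_less power2_eq_square zero_less_mult_iff)
  then have rest0: "(\<Sum>l'\<in>A - {l}. (x l')^2) = 0" and xl: "(x l)^2 = 1" using split2 nn assms(2) by linarith+
  have z: "\<forall>l'\<in>A. l' \<noteq> l \<longrightarrow> x l' = 0"
  proof (intro ballI impI)
    fix l' assume "l' \<in> A" "l' \<noteq> l"
    then have "(x l')^2 = 0" using rest0 assms(1) sum_nonneg_eq_0_iff[of "A - {l}" "\<lambda>l. (x l)^2"] by auto
    then show "x l' = 0" by simp
  qed
  have "(\<Sum>l\<in>A. x l) = x l + (\<Sum>l'\<in>A - {l}. x l')" using assms(1) l(1) by (simp add: sum.remove)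
  also have "(\<Sum>l'\<in>A - {l}. x l') = 0" using z by (intro sum.neutral) auto
  finally have "x l = 1" using assms(3) by simp
  then show ?thesis using l(1) z by blast
qed

definition fixO :: "dP \<Rightarrow> (kel \<Rightarrow> kel) \<Rightarrow> bool" where
  "fixO Z f \<longleftrightarrow> f \<in> Ocar Z \<and> f (kO Z) = kO Z"

definition goodf :: "dP \<Rightarrow> (kel \<Rightarrow> kel) \<Rightarrow> bool" where
  "goodf Z f \<longleftrightarrow> (\<exists>w\<in>What Z. \<forall>x\<in>KZ Z. w (f x) = x)"

definition gf :: "dP \<Rightarrow> (kel \<Rightarrow> kel) \<Rightarrow> int list \<Rightarrow> int list" where
  "gf Z f E = kD (f (0,E,0))"

lemma goodf_What:
  assumes f: "f \<in> Ocar Z" and g: "goodf Z f" shows "f \<in> What Z"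
proof -
  obtain w where w: "w \<in> What Z" "\<And>x. x \<in> KZ Z \<Longrightarrow> w (f x) = x" using g unfolding goodf_def by blast
  have wB: "w \<in> Bij (KZ Z)" using w(1) What_Bij by blast
  have fB: "f \<in> Bij (KZ Z)" using Ocar_D(1)[OF f] .
  have "w \<otimes>\<^bsub>BG Z\<^esub> f = \<one>\<^bsub>BG Z\<^esub>"
  proof (rule Bij_eqI[of _ "KZ Z"])
    show "w \<otimes>\<^bsub>BG Z\<^esub> f \<in> Bij (KZ Z)" using wB fB by (simp add: BG_mult compose_Bij)
    show "\<one>\<^bsub>BG Z\<^esub> \<in> Bij (KZ Z)" by (simp add: BG_one id_Bij)
    fix x assume "x \<in> KZ Z"
    then show "(w \<otimes>\<^bsub>BG Z\<^esub> f) x = \<one>\<^bsub>BG Z\<^esub> x" using wB fB w(2) by (simp add: BG_mult_apply BG_one)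
  qed
  then have "inv\<^bsub>BG Z\<^esub> f = w" using group.inv_equality[OF grpBG] wB fB by simp
  then have "f = inv\<^bsub>BG Z\<^esub> w" using group.inv_inv[OF grpBG] fB by (metis BG_carrier)
  then show ?thesis using subgroup.m_inv_closed[OF What_subgroup w(1)] by simp
qed

lemma goodf_step:
  assumes f: "f \<in> Ocar Z" and s: "s \<in> What Z" and g: "goodf Z (s \<otimes>\<^bsub>BG Z\<^esub> f)" shows "goodf Z f"
proof -
  obtain w where w: "w \<in> What Z" "\<And>x. x \<in> KZ Z \<Longrightarrow> w ((s \<otimes>\<^bsub>BG Z\<^esub> f) x) = x" using g unfolding goodf_def by blast
  have sB: "s \<in> Bij (KZ Z)" using s What_Bij by blast
  have fB: "f \<in> Bij (KZ Z)" using Ocar_D(1)[OF f] .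
  have wB: "w \<in> Bij (KZ Z)" using w(1) What_Bij by blast
  have "(w \<otimes>\<^bsub>BG Z\<^esub> s) (f x) = x" if "x \<in> KZ Z" for x
    using w(2)[OF that] that sB fB wB Ocar_D(2)[OF f that] by (simp add: BG_mult_apply)
  moreover have "w \<otimes>\<^bsub>BG Z\<^esub> s \<in> What Z" using w(1) s by (simp add: subgroup.m_closed[OF What_subgroup])
  ultimately show ?thesis unfolding goodf_def by blast
qed

lemma fun_descent:
  fixes \<mu> :: "(kel \<Rightarrow> kel) \<Rightarrow> nat"
  assumes step: "\<And>f. P f \<Longrightarrow> \<mu> f \<noteq> 0 \<Longrightarrow> \<exists>s\<in>What Z. P (s \<otimes>\<^bsub>BG Z\<^esub> f) \<and> \<mu> (s \<otimes>\<^bsub>BG Z\<^esub> f) < \<mu> f"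
    and base: "\<And>f. P f \<Longrightarrow> \<mu> f = 0 \<Longrightarrow> goodf Z f"
    and O: "\<And>f. P f \<Longrightarrow> f \<in> Ocar Z"
  shows "P f \<Longrightarrow> goodf Z f"
proof (induction "\<mu> f" arbitrary: f rule: less_induct)
  case less
  show ?case
  proof (cases "\<mu> f = 0")
    case True then show ?thesis using base less by blast
  next
    case False
    then obtain s where s: "s \<in> What Z" "P (s \<otimes>\<^bsub>BG Z\<^esub> f)" "\<mu> (s \<otimes>\<^bsub>BG Z\<^esub> f) < \<mu> f" using step less by blast
    have "goodf Z (s \<otimes>\<^bsub>BG Z\<^esub> f)" using less(1)[OF s(3) s(2)] .
    then show ?thesis using goodf_step[OF O[OF less(2)] s(1)] by blast
  qed
qed

lemma kchi_O_left: "kchi Z (kO Z) (s,E,e) = e"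
  by (simp add: kO_def kchi_simp inter_zero)

lemma gf_apply:
  assumes f: "fixO Z f" and E: "length E = picrk Z"
  shows "f (0,E,0) = (0, gf Z f E, 0)" "length (gf Z f E) = picrk Z"
proof -
  have fO: "f \<in> Ocar Z" "f (kO Z) = kO Z" using f by (auto simp: fixO_def)
  have x: "(0,E,0) \<in> KZ Z" using E by (simp add: KZ_iff)
  obtain s E' e where y: "f (0,E,0) = (s,E',e)" "length E' = picrk Z"
    using Ocar_D(2)[OF fO(1) x] by (auto elim: KZ_E)
  have "s = 0" using Ocar_D(5)[OF fO(1) x] y by simp
  moreover have "e = 0"
    using Ocar_D(4)[OF fO(1) kO_KZ x] y fO(2) by (simp add: kchi_O_left)
  ultimately show "f (0,E,0) = (0, gf Z f E, 0)" "length (gf Z f E) = picrk Z" using y by (simp_all add: gf_def)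
qed

lemma gf_inter:
  assumes f: "fixO Z f" and E: "length E = picrk Z" and F: "length F = picrk Z"
  shows "inter Z (gf Z f E) (gf Z f F) = inter Z E F"
proof -
  have fO: "f \<in> Ocar Z" using f by (auto simp: fixO_def)
  have "kchi Z (f (0,E,0)) (f (0,F,0)) = kchi Z (0,E,0) (0,F,0)"
    using Ocar_D(4)[OF fO] E F by (simp add: KZ_iff)
  then show ?thesis using gf_apply[OF f E] gf_apply[OF f F] by (simp add: kchi_simp)
qed

lemma gf_deg:
  assumes f: "fixO Z f" and E: "length E = picrk Z"
  shows "inter Z (gf Z f E) (antiK Z) = inter Z E (antiK Z)"
proof -
  have fO: "f \<in> Ocar Z" using f by (auto simp: fixO_def)
  have "kdeg Z (f (0,E,0)) = kdeg Z (0,E,0)"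
    using Ocar_D(6)[OF fO] E by (simp add: KZ_iff)
  then show ?thesis using gf_apply[OF f E] by (simp add: kdeg_simp)
qed

lemma gf_inj:
  assumes f: "fixO Z f" and E: "length E = picrk Z" and F: "length F = picrk Z" and eq: "gf Z f E = gf Z f F"
  shows "E = F"
proof -
  have fO: "f \<in> Ocar Z" using f by (auto simp: fixO_def)
  have "f (0,E,0) = f (0,F,0)" using gf_apply[OF f E] gf_apply[OF f F] eq by simp
  moreover have "inj_on f (KZ Z)" using Ocar_D(1)[OF fO] by (simp add: Bij_def bij_betw_def)
  ultimately show ?thesis using E F by (auto simp: KZ_iff dest: inj_onD)
qed

lemma fixO_inv:
  assumes f: "fixO Z f" shows "fixO Z (inv\<^bsub>BG Z\<^esub> f)"
proof -
  have fO: "f \<in> Ocar Z" "f (kO Z) = kO Z" using f by (auto simp: fixO_def)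
  have "inv\<^bsub>BG Z\<^esub> f \<in> Ocar Z" using subgroup.m_inv_closed[OF Ocar_subgroup fO(1)] .
  moreover have "(inv\<^bsub>BG Z\<^esub> f) (kO Z) = kO Z"
    using Ocar_D(1)[OF fO(1)] fO(2) Bij_facts(4)[OF Ocar_D(1)[OF fO(1)] kO_KZ] by (simp add: BG_inv_apply)
  ultimately show ?thesis by (simp add: fixO_def)
qed

lemma gf_inv:
  assumes f: "fixO Z f" and E: "length E = picrk Z"
  shows "gf Z f (gf Z (inv\<^bsub>BG Z\<^esub> f) E) = E"
proof -
  have fO: "f \<in> Ocar Z" using f by (auto simp: fixO_def)
  note fi = fixO_inv[OF f]
  have x: "(0,E,0) \<in> KZ Z" using E by (simp add: KZ_iff)
  have "f ((inv\<^bsub>BG Z\<^esub> f) (0,E,0)) = (0,E,0)"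
    using Ocar_D(1)[OF fO] x Bij_facts(3)[OF Ocar_D(1)[OF fO] x] by (simp add: BG_inv_apply)
  then show ?thesis using gf_apply[OF fi E] gf_apply[OF f gf_apply(2)[OF fi E]] by simp
qed

lemma refl0_apply:
  assumes "length E = picrk Z"
  shows "refl Z (0,R,0) (0,E,c) = (0, map2 (+) E (map ((*) (inter Z E R)) R), c)"
  using assms by (simp add: refl_apply KZ_iff kchi_simp)

lemma refl0_kO:
  assumes "length R = picrk Z"
  shows "refl Z (0,R,0) (kO Z) = kO Z"
proof -
  have "map2 (+) (replicate (picrk Z) 0) (map ((*) 0) R) = replicate (picrk Z) (0::int)"
    using assms by (intro nth_equalityI) auto
  moreover have "refl Z (0,R,0) (kO Z) = kadd (kO Z) (ksmul (- kchi Z (kO Z) (0,R,0)) (0,R,0))"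
    by (rule refl_apply[OF kO_KZ])
  ultimately show ?thesis using assms by (simp add: kO_def kchi_simp inter_zero)
qed

lemma fixO_step:
  assumes f: "fixO Z f" and R: "length R = picrk Z" "inter Z R (antiK Z) = 0" "inter Z R R = -2"
  shows "refl Z (0,R,0) \<in> What Z" "fixO Z (refl Z (0,R,0) \<otimes>\<^bsub>BG Z\<^esub> f)"
    "\<And>E. length E = picrk Z \<Longrightarrow> gf Z (refl Z (0,R,0) \<otimes>\<^bsub>BG Z\<^esub> f) E
        = map2 (+) (gf Z f E) (map ((*) (inter Z (gf Z f E) R)) R)"
proof -
  have a: "(0,R,0) \<in> affine_roots Z" using aroot_I[OF R] .
  show w: "refl Z (0,R,0) \<in> What Z" using refl_What[OF a] .
  have fO: "f \<in> Ocar Z" "f (kO Z) = kO Z" using f by (auto simp: fixO_def)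
  have sO: "refl Z (0,R,0) \<in> Ocar Z" using refl_Ocar[OF a] .
  have ap: "(refl Z (0,R,0) \<otimes>\<^bsub>BG Z\<^esub> f) x = refl Z (0,R,0) (f x)" if "x \<in> KZ Z" for x
    using that Ocar_D(1)[OF fO(1)] Ocar_D(1)[OF sO] by (simp add: BG_mult_apply)
  have c1: "refl Z (0,R,0) \<otimes>\<^bsub>BG Z\<^esub> f \<in> Ocar Z" by (rule subgroup.m_closed[OF Ocar_subgroup sO fO(1)])
  have c2: "(refl Z (0,R,0) \<otimes>\<^bsub>BG Z\<^esub> f) (kO Z) = kO Z"
    unfolding ap[OF kO_KZ] fO(2) by (rule refl0_kO[OF R(1)])
  show "fixO Z (refl Z (0,R,0) \<otimes>\<^bsub>BG Z\<^esub> f)" unfolding fixO_def using c1 c2 by blast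
  fix E :: "int list" assume E: "length E = picrk Z"
  have x: "(0,E,0) \<in> KZ Z" using E by (simp add: KZ_iff)
  show "gf Z (refl Z (0,R,0) \<otimes>\<^bsub>BG Z\<^esub> f) E = map2 (+) (gf Z f E) (map ((*) (inter Z (gf Z f E) R)) R)"
    unfolding gf_def[of Z "refl Z (0,R,0) \<otimes>\<^bsub>BG Z\<^esub> f"] ap[OF x] gf_apply(1)[OF f E] refl0_apply[OF gf_apply(2)[OF f E]] by simp
qed

lemma fix_all_goodf:
  assumes f: "fixO Z f" and E: "\<And>i. i < picrk Z \<Longrightarrow> gf Z f (uvec (picrk Z) i) = uvec (picrk Z) i"
  shows "goodf Z f"
proof -
  have fO: "f \<in> Ocar Z" "f (kO Z) = kO Z" using f by (auto simp: fixO_def)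
  have fE: "f (kE Z i) = kE Z i" if "i < picrk Z" for i
    using gf_apply(1)[OF f, of "uvec (picrk Z) i"] E[OF that] by (simp add: kE_def)
  have fx: "f x = x" if x: "x \<in> KZ Z" for x
  proof (rule KZ_nondeg)
    show "f x \<in> KZ Z" using Ocar_D(2)[OF fO(1) x] .
    show "x \<in> KZ Z" by fact
    show "kchi Z (f x) (kp Z) = kchi Z x (kp Z)"
      using Ocar_D(4)[OF fO(1) x kp_KZ] Ocar_kp[OF fO(1)] by simp
    show "kchi Z (f x) (kO Z) = kchi Z x (kO Z)"
      using Ocar_D(4)[OF fO(1) x kO_KZ] fO(2) by simp
    fix i assume "i < picrk Z"
    then show "kchi Z (f x) (kE Z i) = kchi Z x (kE Z i)"
      using Ocar_D(4)[OF fO(1) x kE_KZ, of i] fE[of i] by simp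
  qed
  show ?thesis unfolding goodf_def
  proof (rule bexI[of _ "\<one>\<^bsub>BG Z\<^esub>"])
    show "\<one>\<^bsub>BG Z\<^esub> \<in> What Z" by (rule subgroup.one_closed[OF What_subgroup])
    show "\<forall>x\<in>KZ Z. \<one>\<^bsub>BG Z\<^esub> (f x) = x" using fx Ocar_D(2)[OF fO(1)] by (simp add: BG_one)
  qed
qed

declare inter.simps[simp del] antiK.simps[simp del]

abbreviation HH :: "nat \<Rightarrow> int list" where "HH m \<equiv> uvec (Suc m) 0"
abbreviation EE :: "nat \<Rightarrow> nat \<Rightarrow> int list" where "EE m i \<equiv> uvec (Suc m) i"

lemma inter_uvec_Bl:
  assumes "i \<le> m"
  shows "inter (BlP2 m) D (uvec (Suc m) i) = (if i = 0 then D!0 else - D!i)"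
  using inter_uvec[of i "BlP2 m" D] assms by simp

lemma HH_facts: "inter (BlP2 m) (HH m) (HH m) = 1" "inter (BlP2 m) (HH m) (antiK (BlP2 m)) = 3"
  using inter_uvec_Bl[of 0 m "HH m"] inter_uvec_Bl[of 0 m "antiK (BlP2 m)"] inter_sym[of "BlP2 m" "HH m" "antiK (BlP2 m)"]
  by (simp_all add: antiK_nth)

lemma EE_facts:
  assumes "i \<in> {1..m}"
  shows "inter (BlP2 m) (EE m i) (EE m i) = -1" "inter (BlP2 m) (EE m i) (HH m) = 0"
    "inter (BlP2 m) (EE m i) (antiK (BlP2 m)) = 1"
  using assms inter_uvec_Bl[of i m "EE m i"] inter_uvec_Bl[of 0 m "EE m i"] inter_uvec_Bl[of i m "antiK (BlP2 m)"]
    inter_sym[of "BlP2 m" "EE m i" "antiK (BlP2 m)"]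
  by (simp_all add: antiK_nth)

lemma sq_sum_conv: "(\<Sum>i\<in>A. D!i * D!i) = (\<Sum>i\<in>A. (D!i)^2)" "(\<Sum>i\<in>A. (- (D!i))^2) = (\<Sum>i\<in>A. (D!i :: int)^2)"
  by (simp_all add: power2_eq_square)

lemma perm_key:
  assumes f: "fixO (BlP2 m) f" and H: "gf (BlP2 m) f (HH m) = HH m" and i: "i \<in> {1..m}"
  shows "\<exists>l\<in>{1..m}. gf (BlP2 m) f (EE m i) = EE m l"
proof -
  define e where "e = gf (BlP2 m) f (EE m i)"
  have len: "length e = Suc m" using gf_apply(2)[OF f, of "EE m i"] by (simp add: e_def)
  have lens: "length (EE m i) = picrk (BlP2 m)" "length (HH m) = picrk (BlP2 m)" by simp_all
  have "inter (BlP2 m) e (HH m) = 0"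
    using gf_inter[OF f lens] H EE_facts(2)[OF i] by (simp add: e_def)
  then have e0: "e!0 = 0" using inter_uvec_Bl[of 0 m e] by simp
  have "inter (BlP2 m) e e = -1" using gf_inter[OF f lens(1) lens(1)] EE_facts(1)[OF i] by (simp add: e_def)
  then have sq: "(\<Sum>l\<in>{1..m}. (e!l)^2) = 1" using e0 inter_Bl[of m e e] by (simp add: sq_sum_conv)
  have "inter (BlP2 m) e (antiK (BlP2 m)) = 1" using gf_deg[OF f lens(1)] EE_facts(3)[OF i] by (simp add: e_def)
  then have sm: "(\<Sum>l\<in>{1..m}. e!l) = 1" using e0 inter_antiK_Bl[of m e] by simp
  obtain l where l: "l \<in> {1..m}" "e!l = 1" "\<forall>l'\<in>{1..m}. l' \<noteq> l \<longrightarrow> e!l' = 0"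
    using unit_sq_sum[of "{1..m}" "\<lambda>l. e!l", OF _ sq sm] by auto
  have "e = EE m l"
  proof (rule nth_equalityI)
    show "length e = length (EE m l)" using len by simp
    fix p assume "p < length e"
    then have p: "p \<le> m" using len by simp
    show "e!p = EE m l ! p"
    proof (cases "p = 0")
      case True then show ?thesis using e0 l(1) by simp
    next
      case False then show ?thesis using l p by auto
    qed
  qed
  then show ?thesis using l(1) e_def by auto
qed

lemma Rij_act:
  assumes "length X = Suc m"
  shows "map2 (+) X (map ((*) k) (Rij m i l)) = vec m (\<lambda>p. X!p + k * ((if p = i then 1 else 0) - (if p = l then 1 else 0)))"
  using assms by (intro nth_equalityI) (auto simp: Rij_nth less_Suc_eq_le Rij_def)

lemma stepB_phase2:
  assumes "fixO (BlP2 m) f" "gf (BlP2 m) f (HH m) = HH m"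
  shows "goodf (BlP2 m) f"
proof (rule fun_descent[where P="\<lambda>f. fixO (BlP2 m) f \<and> gf (BlP2 m) f (HH m) = HH m"
      and \<mu>="\<lambda>f. card {i\<in>{1..m}. gf (BlP2 m) f (EE m i) \<noteq> EE m i}"])
  fix f assume P: "fixO (BlP2 m) f \<and> gf (BlP2 m) f (HH m) = HH m"
    and mu: "card {i\<in>{1..m}. gf (BlP2 m) f (EE m i) \<noteq> EE m i} \<noteq> 0"
  then have f: "fixO (BlP2 m) f" and H: "gf (BlP2 m) f (HH m) = HH m" by auto
  have "{i\<in>{1..m}. gf (BlP2 m) f (EE m i) \<noteq> EE m i} \<noteq> {}" using mu by (metis card.empty)
  then obtain i where i: "i \<in> {1..m}" "gf (BlP2 m) f (EE m i) \<noteq> EE m i" by blast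
  obtain l where l: "l \<in> {1..m}" "gf (BlP2 m) f (EE m i) = EE m l" using perm_key[OF f H i(1)] by blast
  have il: "i \<noteq> l" using i l by auto
  note RP = Rij_props[OF i(1) l(1) il]
  define s where "s = refl (BlP2 m) (0, Rij m i l, 0)"
  note st = fixO_step[OF f RP(1-3), folded s_def]
  have act: "gf (BlP2 m) (s \<otimes>\<^bsub>BG (BlP2 m)\<^esub> f) X = vec m (\<lambda>p. gf (BlP2 m) f X ! p + inter (BlP2 m) (gf (BlP2 m) f X) (Rij m i l) * ((if p = i then 1 else 0) - (if p = l then 1 else 0)))"
    if "length X = Suc m" for X
    using st(3)[of X] that Rij_act[of "gf (BlP2 m) f X" m] gf_apply(2)[OF f, of X] by simp
  have fixu: "gf (BlP2 m) (s \<otimes>\<^bsub>BG (BlP2 m)\<^esub> f) (uvec (Suc m) p) = uvec (Suc m) p"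
    if "p \<le> m" "gf (BlP2 m) f (uvec (Suc m) p) = uvec (Suc m) p" "p \<noteq> i" "p \<noteq> l" for p
  proof -
    have "inter (BlP2 m) (uvec (Suc m) p) (Rij m i l) = 0"
      using RP(4)[of "uvec (Suc m) p"] that i(1) l(1) by simp
    then show ?thesis using act[of "uvec (Suc m) p"] that by (intro nth_equalityI) (auto simp: less_Suc_eq_le)
  qed
  have newH: "gf (BlP2 m) (s \<otimes>\<^bsub>BG (BlP2 m)\<^esub> f) (HH m) = HH m"
    using fixu[of 0] H i(1) l(1) by auto
  have newi: "gf (BlP2 m) (s \<otimes>\<^bsub>BG (BlP2 m)\<^esub> f) (EE m i) = EE m i"
  proof -
    have "inter (BlP2 m) (EE m l) (Rij m i l) = 1" using RP(4)[of "EE m l"] il l(1) i(1) by simp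
    then show ?thesis using act[of "EE m i"] l(2) il i(1) l(1) by (intro nth_equalityI) (auto simp: less_Suc_eq_le)
  qed
  have sub: "{k\<in>{1..m}. gf (BlP2 m) (s \<otimes>\<^bsub>BG (BlP2 m)\<^esub> f) (EE m k) \<noteq> EE m k} \<subseteq> {k\<in>{1..m}. gf (BlP2 m) f (EE m k) \<noteq> EE m k} - {i}"
  proof
    fix k assume k: "k \<in> {k\<in>{1..m}. gf (BlP2 m) (s \<otimes>\<^bsub>BG (BlP2 m)\<^esub> f) (EE m k) \<noteq> EE m k}"
    have ki: "k \<noteq> i" using k newi by auto
    have "gf (BlP2 m) f (EE m k) \<noteq> EE m k"
    proof
      assume fk: "gf (BlP2 m) f (EE m k) = EE m k"
      have kl: "k \<noteq> l"
      proof
        assume "k = l"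
        then have "gf (BlP2 m) f (EE m i) = gf (BlP2 m) f (EE m l)" using fk l(2) by simp
        then have "EE m i = EE m l" using gf_inj[OF f] by simp
        then have "EE m i ! i = EE m l ! i" by simp
        then show False using il i(1) by simp
      qed
      then show False using fixu[of k] k fk ki by auto
    qed
    then show "k \<in> {k\<in>{1..m}. gf (BlP2 m) f (EE m k) \<noteq> EE m k} - {i}" using k ki by auto
  qed
  have "card {k\<in>{1..m}. gf (BlP2 m) (s \<otimes>\<^bsub>BG (BlP2 m)\<^esub> f) (EE m k) \<noteq> EE m k}
      < card {k\<in>{1..m}. gf (BlP2 m) f (EE m k) \<noteq> EE m k}"
  proof -
    have "card ({k\<in>{1..m}. gf (BlP2 m) f (EE m k) \<noteq> EE m k} - {i}) < card {k\<in>{1..m}. gf (BlP2 m) f (EE m k) \<noteq> EE m k}"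
      using i by (intro card_Diff1_less) auto
    moreover have "finite ({k\<in>{1..m}. gf (BlP2 m) f (EE m k) \<noteq> EE m k} - {i})" by simp
    ultimately show ?thesis using card_mono[OF _ sub] by linarith
  qed
  then show "\<exists>s\<in>What (BlP2 m). (fixO (BlP2 m) (s \<otimes>\<^bsub>BG (BlP2 m)\<^esub> f) \<and> gf (BlP2 m) (s \<otimes>\<^bsub>BG (BlP2 m)\<^esub> f) (HH m) = HH m) \<and>
      card {i\<in>{1..m}. gf (BlP2 m) (s \<otimes>\<^bsub>BG (BlP2 m)\<^esub> f) (EE m i) \<noteq> EE m i} < card {i\<in>{1..m}. gf (BlP2 m) f (EE m i) \<noteq> EE m i}"
    using st(1,2) newH by blast
next
  fix f assume P: "fixO (BlP2 m) f \<and> gf (BlP2 m) f (HH m) = HH m"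
    and mu: "card {i\<in>{1..m}. gf (BlP2 m) f (EE m i) \<noteq> EE m i} = 0"
  have "gf (BlP2 m) f (EE m i) = EE m i" if "i \<in> {1..m}" for i
    using mu that by simp
  then show "goodf (BlP2 m) f"
    using P by (intro fix_all_goodf) (auto, metis One_nat_def Suc_leI atLeastAtMost_iff less_Suc_eq_le not_gr_zero)
next
  fix f assume "fixO (BlP2 m) f \<and> gf (BlP2 m) f (HH m) = HH m"
  then show "f \<in> Ocar (BlP2 m)" by (simp add: fixO_def)
qed (use assms in auto)

lemma h_facts:
  assumes m: "m \<le> 8" and f: "fixO (BlP2 m) f"
  defines "h \<equiv> gf (BlP2 m) f (HH m)"
  shows "length h = Suc m" "(h!0)^2 - (\<Sum>i\<in>{1..m}. (- (h!i))^2) = 1" "3 * h!0 - (\<Sum>i\<in>{1..m}. - (h!i)) = 3"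
    "\<And>i. i \<in> {1..m} \<Longrightarrow> - (h!i) \<ge> 0"
proof -
  have lH: "length (HH m) = picrk (BlP2 m)" by simp
  show len: "length h = Suc m" using gf_apply(2)[OF f lH] by (simp add: h_def)
  have "inter (BlP2 m) h h = 1" using gf_inter[OF f lH lH] HH_facts(1) by (simp add: h_def)
  moreover have "(\<Sum>i\<in>{1..m}. (- (h!i))^2) = (\<Sum>i\<in>{1..m}. h!i * h!i)" "(h!0)^2 = h!0 * h!0"
    by (simp_all add: power2_eq_square)
  ultimately show "(h!0)^2 - (\<Sum>i\<in>{1..m}. (- (h!i))^2) = 1" using inter_Bl[of m h h] by linarith
  have "inter (BlP2 m) h (antiK (BlP2 m)) = 3" using gf_deg[OF f lH] HH_facts(2) by (simp add: h_def)
  then show "3 * h!0 - (\<Sum>i\<in>{1..m}. - (h!i)) = 3" using inter_antiK_Bl[of m h] by (simp add: sum_negf)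
  fix i assume i: "i \<in> {1..m}"
  define f' where "f' = inv\<^bsub>BG (BlP2 m)\<^esub> f"
  have f': "fixO (BlP2 m) f'" using fixO_inv[OF f] by (simp add: f'_def)
  have lE: "length (EE m i) = picrk (BlP2 m)" by simp
  define e where "e = gf (BlP2 m) f' (EE m i)"
  have le: "length e = picrk (BlP2 m)" using gf_apply(2)[OF f' lE] by (simp add: e_def)
  have "inter (BlP2 m) e e = -1" using gf_inter[OF f' lE lE] EE_facts(1)[OF i] by (simp add: e_def)
  moreover have "(\<Sum>i\<in>{1..m}. (e!i)^2) = (\<Sum>i\<in>{1..m}. e!i * e!i)" "(e!0)^2 = e!0 * e!0"
    by (simp_all add: power2_eq_square)
  ultimately have q: "(e!0)^2 - (\<Sum>l\<in>{1..m}. (e!l)^2) = -1" using inter_Bl[of m e e] by linarith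
  have "inter (BlP2 m) e (antiK (BlP2 m)) = 1" using gf_deg[OF f' lE] EE_facts(3)[OF i] by (simp add: e_def)
  then have l: "3 * e!0 + (\<Sum>l\<in>{1..m}. e!l) = 1" using inter_antiK_Bl[of m e] by simp
  have e0: "e!0 \<ge> 0" using exceptional_nonneg[OF m q l] .
  have "gf (BlP2 m) f e = EE m i" using gf_inv[OF f lE] by (simp add: e_def f'_def)
  then have "inter (BlP2 m) h (EE m i) = inter (BlP2 m) (HH m) e"
    using gf_inter[OF f lH le] by (simp add: h_def)
  also have "\<dots> = e!0" using inter_uvec_Bl[of 0 m e] inter_sym[of "BlP2 m" "HH m" e] by simp
  finally show "- (h!i) \<ge> 0" using inter_uvec_Bl[of i m h] i e0 by simp
qed

lemma noether_h:
  fixes h :: "int list"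
  assumes m: "m \<le> 8" and nn: "\<forall>i\<in>{1..m}. - (h!i) \<ge> 0"
    and q: "(h!0)^2 - (\<Sum>i\<in>{1..m}. (- (h!i))^2) = 1" and l: "3 * h!0 - (\<Sum>i\<in>{1..m}. - (h!i)) = 3"
  shows "h!0 \<ge> 1" "h!0 \<ge> 2 \<Longrightarrow> \<exists>i j k. i \<in> {1..m} \<and> j \<in> {1..m} \<and> k \<in> {1..m} \<and> i \<noteq> j \<and> i \<noteq> k \<and> j \<noteq> k \<and> - (h!i) + - (h!j) + - (h!k) > h!0"
proof -
  show "h!0 \<ge> 1" by (rule noether(1)[where c="\<lambda>i. - (h!i)"]) (use m nn q l in auto)
  assume a: "h!0 \<ge> 2"
  show "\<exists>i j k. i \<in> {1..m} \<and> j \<in> {1..m} \<and> k \<in> {1..m} \<and> i \<noteq> j \<and> i \<noteq> k \<and> j \<noteq> k \<and> - (h!i) + - (h!j) + - (h!k) > h!0"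
    by (rule noether(2)[where c="\<lambda>i. - (h!i)"]) (use m nn q l a in auto)
qed

lemma stepB_Bl:
  assumes m: "m \<le> 8" and f: "fixO (BlP2 m) f"
  shows "goodf (BlP2 m) f"
proof (rule fun_descent[where P="fixO (BlP2 m)" and \<mu>="\<lambda>f. nat (gf (BlP2 m) f (HH m) ! 0 - 1)"])
  fix f assume f: "fixO (BlP2 m) f" and mu: "nat (gf (BlP2 m) f (HH m) ! 0 - 1) \<noteq> 0"
  define h where "h = gf (BlP2 m) f (HH m)"
  note hf = h_facts[OF m f, folded h_def]
  have nnb: "\<forall>i\<in>{1..m}. - (h!i) \<ge> 0" using hf(4) by blast
  note N = noether_h[OF m nnb hf(2) hf(3)]
  have a2: "h!0 \<ge> 2" using mu h_def by simp
  obtain i j k where ijk: "i \<in> {1..m}" "j \<in> {1..m}" "k \<in> {1..m}" "i \<noteq> j" "i \<noteq> k" "j \<noteq> k"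
    "- (h!i) + - (h!j) + - (h!k) > h!0"
    using N(2)[OF a2] by blast
  note RP = Rt_props[OF ijk(1-6)]
  define s where "s = refl (BlP2 m) (0, Rt m i j k, 0)"
  note st = fixO_step[OF f RP(1-3), folded s_def]
  define h' where "h' = gf (BlP2 m) (s \<otimes>\<^bsub>BG (BlP2 m)\<^esub> f) (HH m)"
  have "h' = map2 (+) h (map ((*) (inter (BlP2 m) h (Rt m i j k))) (Rt m i j k))"
    using st(3)[of "HH m"] by (simp add: h'_def h_def)
  then have "h'!0 = h!0 + inter (BlP2 m) h (Rt m i j k)"
    using hf(1) RP(1,5) by simp
  also have "inter (BlP2 m) h (Rt m i j k) = h!0 + h!i + h!j + h!k" using RP(4)[OF hf(1)] .
  finally have h'0: "h'!0 < h!0" using ijk(7) by simp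
  have "h'!0 \<ge> 1"
  proof -
    have nnb': "\<forall>i\<in>{1..m}. - (h'!i) \<ge> 0" using h_facts(4)[OF m st(2)] by (simp add: h'_def)
    show ?thesis using noether_h(1)[OF m nnb' h_facts(2)[OF m st(2), folded h'_def] h_facts(3)[OF m st(2), folded h'_def]] .
  qed
  then have "nat (h'!0 - 1) < nat (h!0 - 1)" using h'0 by simp
  then show "\<exists>s\<in>What (BlP2 m). fixO (BlP2 m) (s \<otimes>\<^bsub>BG (BlP2 m)\<^esub> f) \<and>
      nat (gf (BlP2 m) (s \<otimes>\<^bsub>BG (BlP2 m)\<^esub> f) (HH m) ! 0 - 1) < nat (gf (BlP2 m) f (HH m) ! 0 - 1)"
    using st(1,2) by (auto simp: h'_def h_def)
next
  fix f assume f: "fixO (BlP2 m) f" and mu: "nat (gf (BlP2 m) f (HH m) ! 0 - 1) = 0"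
  define h where "h = gf (BlP2 m) f (HH m)"
  note hf = h_facts[OF m f, folded h_def]
  have nnb: "\<forall>i\<in>{1..m}. - (h!i) \<ge> 0" using hf(4) by blast
  note N = noether_h[OF m nnb hf(2) hf(3)]
  have a1: "h!0 = 1" using mu N(1) h_def by simp
  then have "(\<Sum>i\<in>{1..m}. (- (h!i))^2) = 0" using hf(2) by simp
  then have z: "h!i = 0" if "i \<in> {1..m}" for i
    using that sum_nonneg_eq_0_iff[of "{1..m}" "\<lambda>i. (- (h!i))^2"] by simp
  have "h = HH m"
  proof (rule nth_equalityI)
    show "length h = length (HH m)" using hf(1) by simp
    fix p assume "p < length h"
    then have "p \<le> m" using hf(1) by simp
    then show "h!p = HH m ! p" using a1 z[of p] by (cases "p = 0") auto
  qed
  then show "goodf (BlP2 m) f" using stepB_phase2[OF f] h_def by simp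
next
  fix f assume "fixO (BlP2 m) f" then show "f \<in> Ocar (BlP2 m)" by (simp add: fixO_def)
qed (use f in auto)

lemma P1_case1:
  assumes f: "fixO P1xP1 f" and F1: "gf P1xP1 f [1,0] = [1,0]"
  shows "goodf P1xP1 f"
proof -
  have l: "length [1::int,0] = picrk P1xP1" "length [0::int,1] = picrk P1xP1" by simp_all
  define h where "h = gf P1xP1 f [0,1]"
  have lh: "length h = 2" using gf_apply(2)[OF f l(2)] by (simp add: h_def)
  have "inter P1xP1 [1,0] h = 1" using gf_inter[OF f l(1) l(2)] F1 by (simp add: h_def inter.simps antiK.simps)
  then have h1: "h!1 = 1" by (simp add: inter.simps antiK.simps)
  have "inter P1xP1 h h = 0" using gf_inter[OF f l(2) l(2)] by (simp add: h_def inter.simps antiK.simps)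
  then have h0: "h!0 = 0" using h1 by (simp add: inter.simps antiK.simps)
  have "h = [0,1]" using lh h0 h1 by (intro nth_equalityI) (auto simp: less_Suc_eq numeral_2_eq_2)
  then have "gf P1xP1 f (uvec 2 i) = uvec 2 i" if "i < 2" for i
    using that F1 h_def by (auto simp: less_Suc_eq numeral_2_eq_2 uvec_def)
  then show ?thesis by (intro fix_all_goodf[OF f]) simp
qed

lemma stepB_P1:
  assumes f: "fixO P1xP1 f" shows "goodf P1xP1 f"
proof -
  have l: "length [1::int,0] = picrk P1xP1" by simp
  define h where "h = gf P1xP1 f [1,0]"
  have lh: "length h = 2" using gf_apply(2)[OF f l] by (simp add: h_def)
  have "inter P1xP1 h h = 0" using gf_inter[OF f l l] by (simp add: h_def inter.simps antiK.simps)
  then have p: "h!0 * h!1 = 0" by (simp add: inter.simps antiK.simps)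
  have "inter P1xP1 h (antiK P1xP1) = 2" using gf_deg[OF f l] by (simp add: h_def inter.simps antiK.simps)
  then have s: "h!0 + h!1 = 1" by (simp add: inter.simps antiK.simps)
  show ?thesis
  proof (cases "h!0 = 0")
    case False
    then have "h!1 = 0" "h!0 = 1" using p s by auto
    then have "h = [1,0]" using lh by (intro nth_equalityI) (auto simp: less_Suc_eq numeral_2_eq_2)
    then show ?thesis using P1_case1[OF f] h_def by simp
  next
    case True
    then have "h!1 = 1" using s by simp
    then have hF2: "h = [0,1]" using lh True by (intro nth_equalityI) (auto simp: less_Suc_eq numeral_2_eq_2)
    have RP: "length [1::int,-1] = picrk P1xP1" "inter P1xP1 [1,-1] (antiK P1xP1) = 0" "inter P1xP1 [1,-1] [1,-1] = -2"
      by (simp_all add: inter.simps antiK.simps)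
    note st = fixO_step[OF f RP]
    have "gf P1xP1 (refl P1xP1 (0,[1,-1],0) \<otimes>\<^bsub>BG P1xP1\<^esub> f) [1,0] = [1,0]"
      using st(3)[OF l] hF2 h_def by (simp add: inter.simps antiK.simps)
    then have "goodf P1xP1 (refl P1xP1 (0,[1,-1],0) \<otimes>\<^bsub>BG P1xP1\<^esub> f)" using P1_case1[OF st(2)] by simp
    then show ?thesis using goodf_step[of f P1xP1] st(1) f by (simp add: fixO_def)
  qed
qed

lemma kO_good: assumes "f \<in> Ocar Z" shows "good_u Z (f (kO Z))"
proof -
  have "krk (kO Z) = 1" "kdeg Z (kO Z) = 0" "kchi Z (kO Z) (kO Z) = 1"
    by (simp_all add: kO_def kdeg_simp kchi_simp inter_zero)
  then show ?thesis using Ocar_D[OF assms] kO_KZ unfolding good_u_def by metis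
qed

lemma main_reduce:
  assumes f: "f \<in> Ocar Z" and r: "reachO Z (f (kO Z))" and B: "\<And>f'. fixO Z f' \<Longrightarrow> goodf Z f'"
  shows "f \<in> What Z"
proof -
  obtain w where w: "w \<in> What Z" "w (f (kO Z)) = kO Z" using r unfolding reachO_def by blast
  have wO: "w \<in> Ocar Z" using w(1) What_sub_Ocar by blast
  have f1: "w \<otimes>\<^bsub>BG Z\<^esub> f \<in> Ocar Z" using subgroup.m_closed[OF Ocar_subgroup wO f] .
  have "(w \<otimes>\<^bsub>BG Z\<^esub> f) (kO Z) = kO Z"
    using w(2) Ocar_D(1)[OF wO] Ocar_D(1)[OF f] by (simp add: BG_mult_apply)
  then have "fixO Z (w \<otimes>\<^bsub>BG Z\<^esub> f)" using f1 by (simp add: fixO_def)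
  then have "goodf Z (w \<otimes>\<^bsub>BG Z\<^esub> f)" using B by blast
  then have "goodf Z f" using goodf_step[OF f w(1)] by blast
  then show ?thesis using goodf_What[OF f] by blast
qed

lemma part_i:
  assumes dp: "delPezzo Z" and n1: "Z \<noteq> BlP2 1" and n2: "Z \<noteq> BlP2 2"
  shows "Ocar Z = What Z"
proof
  show "What Z \<subseteq> Ocar Z" by (rule What_sub_Ocar)
  show "Ocar Z \<subseteq> What Z"
  proof
    fix f assume f: "f \<in> Ocar Z"
    note g = kO_good[OF f]
    show "f \<in> What Z"
    proof (cases Z)
      case P1xP1
      have r: "reachO Z (f (kO Z))" using stepA_P1 g P1xP1 by simp
      have b: "goodf Z f'" if "fixO Z f'" for f' using stepB_P1 that P1xP1 by simp
      show ?thesis using main_reduce[OF f r b] .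
    next
      case (BlP2 m)
      then have m8: "m \<le> 8" using dp by (simp add: delPezzo_def)
      have cond: "3 \<le> m \<or> kD (f (kO Z)) ! 0 = 0"
      proof (cases "3 \<le> m")
        case False
        then have "m = 0" using n1 n2 BlP2 by auto
        then show ?thesis using good_u_Bl[of m "f (kO Z)"] g BlP2 by auto
      qed simp
      have r: "reachO Z (f (kO Z))" using stepA_Bl[of m "f (kO Z)"] g cond BlP2 by simp
      have b: "goodf Z f'" if "fixO Z f'" for f' using stepB_Bl[OF m8] that BlP2 by simp
      show ?thesis using main_reduce[OF f r b] .
    qed
  qed
qed

lemma conj_refl:
  assumes f: "f \<in> Ocar Z" and a: "a \<in> affine_roots Z"
  shows "f a \<in> affine_roots Z"
    "f \<otimes>\<^bsub>BG Z\<^esub> refl Z a \<otimes>\<^bsub>BG Z\<^esub> inv\<^bsub>BG Z\<^esub> f = refl Z (f a)"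
proof -
  note A = aroot_D[OF a] and F = Ocar_D[OF f]
  show fa: "f a \<in> affine_roots Z" unfolding affine_roots_def using A(1-4) F(2)[OF A(1)] F(4)[OF A(1) A(1)] F(5)[OF A(1)] F(6)[OF A(1)] by simp
  have fB: "f \<in> Bij (KZ Z)" using F(1) .
  have iB: "inv\<^bsub>BG Z\<^esub> f \<in> Bij (KZ Z)" using fB by (simp add: inv_BijGroup restrict_inv_into_Bij)
  have rB: "refl Z a \<in> Bij (KZ Z)" using refl_Bij[OF a] .
  show "f \<otimes>\<^bsub>BG Z\<^esub> refl Z a \<otimes>\<^bsub>BG Z\<^esub> inv\<^bsub>BG Z\<^esub> f = refl Z (f a)"
  proof (rule Bij_eqI[of _ "KZ Z"])
    show "f \<otimes>\<^bsub>BG Z\<^esub> refl Z a \<otimes>\<^bsub>BG Z\<^esub> inv\<^bsub>BG Z\<^esub> f \<in> Bij (KZ Z)"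
      using fB rB iB by (simp add: BG_mult compose_Bij)
    show "refl Z (f a) \<in> Bij (KZ Z)" using refl_Bij[OF fa] .
    fix y assume y: "y \<in> KZ Z"
    define x where "x = inv_into (KZ Z) f y"
    have x: "x \<in> KZ Z" "f x = y" using Bij_facts[OF fB y] by (auto simp: x_def)
    have lhs: "(f \<otimes>\<^bsub>BG Z\<^esub> refl Z a \<otimes>\<^bsub>BG Z\<^esub> inv\<^bsub>BG Z\<^esub> f) y = f (refl Z a x)"
    proof -
      have frB: "f \<otimes>\<^bsub>BG Z\<^esub> refl Z a \<in> Bij (KZ Z)" using fB rB by (simp add: BG_mult compose_Bij)
      have "(f \<otimes>\<^bsub>BG Z\<^esub> refl Z a \<otimes>\<^bsub>BG Z\<^esub> inv\<^bsub>BG Z\<^esub> f) y = (f \<otimes>\<^bsub>BG Z\<^esub> refl Z a) ((inv\<^bsub>BG Z\<^esub> f) y)"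
        using BG_mult_apply[OF frB iB y] .
      also have "\<dots> = f (refl Z a x)"
        using BG_mult_apply[OF fB rB x(1)] BG_inv_apply[OF fB y] by (simp add: x_def)
      finally show ?thesis .
    qed
    have "f (refl Z a x) = refl Z (f a) y"
    proof (rule KZ_nondeg')
      show "f (refl Z a x) \<in> KZ Z" using F(2) refl_KZ[OF a x(1)] .
      show "refl Z (f a) y \<in> KZ Z" using refl_KZ[OF fa y] .
      fix t assume t: "t \<in> KZ Z"
      define t' where "t' = inv_into (KZ Z) f t"
      have t': "t' \<in> KZ Z" "f t' = t" using Bij_facts[OF fB t] by (auto simp: t'_def)
      have "kchi Z (f (refl Z a x)) t = kchi Z (refl Z a x) t'"
        using F(4)[OF refl_KZ[OF a x(1)] t'(1)] t'(2) by simp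
      also have "\<dots> = kchi Z x t' - kchi Z x a * kchi Z a t'" by (rule refl_chi_left[OF a x(1)])
      also have "\<dots> = kchi Z y t - kchi Z y (f a) * kchi Z (f a) t"
        using F(4)[OF x(1) t'(1)] F(4)[OF x(1) A(1)] F(4)[OF A(1) t'(1)] x(2) t'(2) by simp
      also have "\<dots> = kchi Z (refl Z (f a) y) t" by (rule refl_chi_left[OF fa y, symmetric])
      finally show "kchi Z (f (refl Z a x)) t = kchi Z (refl Z (f a) y) t" .
    qed
    then show "(f \<otimes>\<^bsub>BG Z\<^esub> refl Z a \<otimes>\<^bsub>BG Z\<^esub> inv\<^bsub>BG Z\<^esub> f) y = refl Z (f a) y" using lhs by simp
  qed
qed

lemma OGrp_group: "group (OGrp Z)"
  unfolding OGrp_def by (rule group.subgroup_imp_group[OF grpBG Ocar_subgroup])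

lemma OGrp_simps[simp]: "carrier (OGrp Z) = Ocar Z" "mult (OGrp Z) = mult (BG Z)" "one (OGrp Z) = one (BG Z)"
  by (simp_all add: OGrp_def)

lemma What_normal: "What Z \<lhd> OGrp Z"
proof -
  have sub: "refl Z ` affine_roots Z \<subseteq> Ocar Z" using refl_Ocar by blast
  have eq: "What Z = generate (OGrp Z) (refl Z ` affine_roots Z)"
    unfolding What_def OGrp_def using group.generate_consistent[OF grpBG sub Ocar_subgroup] by simp
  show ?thesis unfolding eq
  proof (rule group.normal_generateI[OF OGrp_group])
    show "refl Z ` affine_roots Z \<subseteq> carrier (OGrp Z)" using sub by simp
    fix h g assume h: "h \<in> refl Z ` affine_roots Z" and g: "g \<in> carrier (OGrp Z)"
    obtain a where a: "a \<in> affine_roots Z" "h = refl Z a" using h by blast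
    have "inv\<^bsub>OGrp Z\<^esub> g = inv\<^bsub>BG Z\<^esub> g"
      using group.m_inv_consistent[OF grpBG Ocar_subgroup] g by (simp add: OGrp_def)
    then show "g \<otimes>\<^bsub>OGrp Z\<^esub> h \<otimes>\<^bsub>OGrp Z\<^esub> inv\<^bsub>OGrp Z\<^esub> g \<in> refl Z ` affine_roots Z"
      using conj_refl[of g Z a] a g by simp
  qed
qed

definition tr :: "dP \<Rightarrow> int list \<Rightarrow> int \<Rightarrow> kel \<Rightarrow> kel" where
  "tr Z L q = restrict (\<lambda>x. (krk x, map2 (+) (kD x) (map ((*) (krk x)) L), snd (snd x) + inter Z L (kD x) + krk x * q)) (KZ Z)"

lemma tr_apply: "length D = picrk Z \<Longrightarrow> tr Z L q (r,D,c) = (r, map2 (+) D (map ((*) r) L), c + inter Z L D + r * q)"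
  by (simp add: tr_def KZ_iff)

lemma inter_addsmul:
  assumes "length D = picrk Z" "length L = picrk Z"
  shows "inter Z (map2 (+) D (map ((*) r) L)) F = inter Z D F + r * inter Z L F"
  using inter_add[of D Z "map ((*) r) L" F] inter_smul[of L Z r F] assms by simp

lemma inter_addsmul_r:
  assumes "length D = picrk Z" "length L = picrk Z"
  shows "inter Z F (map2 (+) D (map ((*) r) L)) = inter Z F D + r * inter Z F L"
  using inter_addsmul[OF assms, of r F] inter_sym[of Z F] by metis

lemma tr_KZ: "length L = picrk Z \<Longrightarrow> x \<in> KZ Z \<Longrightarrow> tr Z L q x \<in> KZ Z"
  by (auto elim!: KZ_E simp: tr_apply KZ_iff)

lemma tr_tr:
  assumes L: "length L = picrk Z" "inter Z L L = 2 * q" and x: "x \<in> KZ Z"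
  shows "tr Z (map ((*) (-1)) L) q (tr Z L q x) = x"
proof -
  obtain r D c where xx: "x = (r,D,c)" "length D = picrk Z" using x by (auto elim: KZ_E)
  have lD: "length (map2 (+) D (map ((*) r) L)) = picrk Z" using xx L by simp
  have l': "length (map ((*) (-1)) L) = picrk Z" using L by simp
  have i1: "inter Z (map ((*) (-1)) L) (map2 (+) D (map ((*) r) L)) = - inter Z L D - r * (2*q)"
    using inter_addsmul_r[OF xx(2) L(1), of "map ((*) (-1)) L" r] inter_smul[OF L(1), of "-1"] L(2)
      inter_smul[OF L(1), of "-1" D] by simp
  have "map2 (+) (map2 (+) D (map ((*) r) L)) (map ((*) r) (map ((*) (-1)) L)) = D"
    using xx L by (intro nth_equalityI) auto
  then show ?thesis using xx lD i1 by (simp add: tr_apply algebra_simps)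
qed

lemma neg_neg_list: "map ((*) (-1)) (map ((*) (-1)) L) = (L :: int list)"
  by (induct L) auto

lemma tr_Ocar:
  assumes L: "length L = picrk Z" "inter Z L (antiK Z) = 0" "inter Z L L = 2 * q"
  shows "tr Z L q \<in> Ocar Z"
proof (rule OcarI)
  have L': "length (map ((*) (-1)) L) = picrk Z" "inter Z (map ((*) (-1)) L) (map ((*) (-1)) L) = 2 * q"
    using L inter_smul[OF L(1), of "-1" "map ((*) (-1)) L"] inter_smul[OF L(1), of "-1" L] inter_sym[of Z L "map ((*) (-1)) L"]
    by auto
  have "bij_betw (tr Z L q) (KZ Z) (KZ Z)"
    by (rule bij_betw_byWitness[where f'="tr Z (map ((*) (-1)) L) q"])
       (use tr_tr[OF L(1,3)] tr_tr[OF L'] tr_KZ L(1) L'(1) neg_neg_list in auto)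
  then show "tr Z L q \<in> Bij (KZ Z)" by (simp add: Bij_def tr_def)
next
  fix x y assume x: "x \<in> KZ Z" and y: "y \<in> KZ Z"
  obtain r D c where xx: "x = (r,D,c)" "length D = picrk Z" using x by (auto elim: KZ_E)
  obtain s E e where yy: "y = (s,E,e)" "length E = picrk Z" using y by (auto elim: KZ_E)
  have lDE: "length (map2 (+) D E) = picrk Z" using xx yy by simp
  have i1: "inter Z L (map2 (+) D E) = inter Z L D + inter Z L E"
    using inter_add[OF xx(2) yy(2), of L] inter_sym[of Z L] by metis
  have "map2 (+) (map2 (+) D E) (map ((*) (r + s)) L) = map2 (+) (map2 (+) D (map ((*) r) L)) (map2 (+) E (map ((*) s) L))"
    using xx yy L by (intro nth_equalityI) (auto simp: algebra_simps)
  then show "tr Z L q (kadd x y) = kadd (tr Z L q x) (tr Z L q y)"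
    using xx yy lDE i1 by (simp add: tr_apply algebra_simps)
  have a1: "inter Z (map2 (+) D (map ((*) r) L)) (antiK Z) = inter Z D (antiK Z)"
    using inter_addsmul[OF xx(2) L(1)] L(2) by simp
  have a2: "inter Z (map2 (+) D (map ((*) r) L)) (map2 (+) E (map ((*) s) L))
      = inter Z D E + s * inter Z D L + r * inter Z L E + r * s * (2 * q)"
    using inter_addsmul[OF xx(2) L(1), of r "map2 (+) E (map ((*) s) L)"]
      inter_addsmul_r[OF yy(2) L(1), of D s] inter_addsmul_r[OF yy(2) L(1), of L s] L(3)
    by (simp add: algebra_simps)
  have a3: "inter Z D L = inter Z L D" by (rule inter_sym)
  show "kchi Z (tr Z L q x) (tr Z L q y) = kchi Z x y"
    using xx yy a1 a2 a3 by (simp add: tr_apply kchi_simp algebra_simps)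
next
  fix x assume x: "x \<in> KZ Z"
  obtain r D c where xx: "x = (r,D,c)" "length D = picrk Z" using x by (auto elim: KZ_E)
  show "krk (tr Z L q x) = krk x" using xx by (simp add: tr_apply)
  show "kdeg Z (tr Z L q x) = kdeg Z x"
    using xx inter_addsmul[OF xx(2) L(1), of r "antiK Z"] L(2) by (simp add: tr_apply kdeg_simp)
qed

definition shift :: "dP \<Rightarrow> (kel \<Rightarrow> kel) \<Rightarrow> int \<Rightarrow> bool" where
  "shift Z h t \<longleftrightarrow> h \<in> Ocar Z \<and> (\<forall>x\<in>KZ Z. kD (h x) ! 0 = kD x ! 0 + t * krk x)"

lemma shift_one: "shift Z (\<one>\<^bsub>BG Z\<^esub>) 0"
  unfolding shift_def using subgroup.one_closed[OF Ocar_subgroup] by (simp add: BG_one)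

lemma shift_mult:
  assumes "shift Z h t" "shift Z h' t'" shows "shift Z (h \<otimes>\<^bsub>BG Z\<^esub> h') (t + t')"
proof -
  have h: "h \<in> Ocar Z" and h': "h' \<in> Ocar Z" using assms by (auto simp: shift_def)
  have "kD ((h \<otimes>\<^bsub>BG Z\<^esub> h') x) ! 0 = kD x ! 0 + (t + t') * krk x" if x: "x \<in> KZ Z" for x
  proof -
    have "(h \<otimes>\<^bsub>BG Z\<^esub> h') x = h (h' x)" using Ocar_D(1)[OF h] Ocar_D(1)[OF h'] x by (simp add: BG_mult_apply)
    moreover have "h' x \<in> KZ Z" "krk (h' x) = krk x" using Ocar_D(2,5)[OF h' x] by auto
    ultimately show ?thesis using assms x by (simp add: shift_def algebra_simps)
  qed
  then show ?thesis using subgroup.m_closed[OF Ocar_subgroup h h'] by (simp add: shift_def)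
qed

lemma shift_inv:
  assumes "shift Z h t" shows "shift Z (inv\<^bsub>BG Z\<^esub> h) (- t)"
proof -
  have h: "h \<in> Ocar Z" using assms by (auto simp: shift_def)
  note hB = Ocar_D(1)[OF h]
  have "kD ((inv\<^bsub>BG Z\<^esub> h) x) ! 0 = kD x ! 0 + (- t) * krk x" if x: "x \<in> KZ Z" for x
  proof -
    define y where "y = inv_into (KZ Z) h x"
    have y: "y \<in> KZ Z" "h y = x" using Bij_facts[OF hB x] by (auto simp: y_def)
    have "kD (h y) ! 0 = kD y ! 0 + t * krk y" using assms y(1) by (simp add: shift_def)
    moreover have "krk (h y) = krk y" using Ocar_D(5)[OF h y(1)] .
    ultimately show ?thesis using y BG_inv_apply[OF hB x] by (simp add: y_def algebra_simps)
  qed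
  then show ?thesis using subgroup.m_inv_closed[OF Ocar_subgroup h] by (simp add: shift_def)
qed

lemma shift_pow_nat: "shift Z g 1 \<Longrightarrow> shift Z (g [^]\<^bsub>BG Z\<^esub> (n::nat)) (int n)"
proof (induct n)
  case 0 then show ?case using shift_one by simp
next
  case (Suc n)
  have e: "g [^]\<^bsub>BG Z\<^esub> (Suc n) = g [^]\<^bsub>BG Z\<^esub> n \<otimes>\<^bsub>BG Z\<^esub> g" by (rule nat_pow_Suc)
  have "int (Suc n) = int n + 1" by simp
  then show ?case unfolding e using shift_mult[OF Suc(1)[OF Suc(2)] Suc(2)] by metis
qed

lemma shift_pow_int: assumes "shift Z g 1" shows "shift Z (g [^]\<^bsub>BG Z\<^esub> (k::int)) k"
proof (cases "k < 0")
  case True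
  have e: "g [^]\<^bsub>BG Z\<^esub> k = inv\<^bsub>BG Z\<^esub> (g [^]\<^bsub>BG Z\<^esub> nat (-k))"
    using True int_pow_def2[of "BG Z" g k] by presburger
  have "- int (nat (-k)) = k" using True by simp
  then show ?thesis unfolding e using shift_inv[OF shift_pow_nat[OF assms, of "nat (-k)"]] by metis
next
  case False
  have e: "g [^]\<^bsub>BG Z\<^esub> k = g [^]\<^bsub>BG Z\<^esub> nat k"
    using False int_pow_def2[of "BG Z" g k] by presburger
  have "int (nat k) = k" using False by simp
  then show ?thesis unfolding e using shift_pow_nat[OF assms, of "nat k"] by metis
qed

lemma tr_shift:
  assumes L: "length L = picrk Z" "inter Z L (antiK Z) = 0" "inter Z L L = 2 * q" and pos: "0 < picrk Z"
  shows "shift Z (tr Z L q) (L!0)"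
proof -
  have "kD (tr Z L q x) ! 0 = kD x ! 0 + L!0 * krk x" if x: "x \<in> KZ Z" for x
  proof -
    obtain r D c where xx: "x = (r,D,c)" "length D = picrk Z" using x by (auto elim: KZ_E)
    then show ?thesis using L pos by (simp add: tr_apply)
  qed
  then show ?thesis using tr_Ocar[OF L] by (simp add: shift_def)
qed

lemma kO_D0: "0 < picrk Z \<Longrightarrow> kD (kO Z) ! 0 = 0" by (simp add: kO_def)
lemma kO_rk: "krk (kO Z) = 1" by (simp add: kO_def)

lemma shift_unique:
  assumes "shift Z h t" "shift Z h t'" "0 < picrk Z" shows "t = t'"
  using assms kO_KZ[of Z] kO_rk[of Z] unfolding shift_def by force

lemma reduce_shift0:
  assumes m: "m \<le> 8" and f: "f \<in> Ocar (BlP2 m)" and s: "kD (f (kO (BlP2 m))) ! 0 = 0"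
  shows "f \<in> What (BlP2 m)"
proof -
  have r: "reachO (BlP2 m) (f (kO (BlP2 m)))" using stepA_Bl[OF kO_good[OF f]] s by blast
  show ?thesis using main_reduce[OF f r stepB_Bl[OF m]] .
qed

lemma sum12: "(\<Sum>i\<in>{1..2::nat}. f i) = f 1 + (f 2 :: int)"
  by (simp add: numeral_2_eq_2)
lemma sum12': "(\<Sum>i\<in>{Suc 0..2::nat}. f i) = f 1 + (f 2 :: int)"
  by (simp add: numeral_2_eq_2)
lemma sum11: "(\<Sum>i\<in>{1..1::nat}. f i) = (f 1 :: int)"
  by simp

lemma L2_facts: "length [1,-3,0::int] = picrk (BlP2 2)" "inter (BlP2 2) [1,-3,0] (antiK (BlP2 2)) = 0"
  "inter (BlP2 2) [1,-3,0] [1,-3,0] = 2 * (-4)"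
  using inter_antiK_Bl[of 2 "[1,-3,0]"] inter_Bl[of 2 "[1,-3,0]" "[1,-3,0]"] by (simp_all add: sum12')

lemma L1_facts: "length [1,-3::int] = picrk (BlP2 1)" "inter (BlP2 1) [1,-3] (antiK (BlP2 1)) = 0"
  "inter (BlP2 1) [1,-3] [1,-3] = 2 * (-4)"
  using inter_antiK_Bl[of 1 "[1,-3]"] inter_Bl[of 1 "[1,-3]" "[1,-3]"] by simp_all

lemma roots2: assumes "(r, R, c) \<in> affine_roots (BlP2 2)" shows "R!0 = 0"
proof -
  have len: "length R = 3" and d: "inter (BlP2 2) R (antiK (BlP2 2)) = 0" and q: "- inter (BlP2 2) R R = 2"
    using assms by (auto simp: affine_roots_def KZ_iff kdeg_simp kchi_simp)
  define a where "a = R!0" define b1 where "b1 = R!1" define b2 where "b2 = R!2"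
  have l: "3*a + b1 + b2 = 0" using d inter_antiK_Bl[of 2 R] by (simp add: sum12' a_def b1_def b2_def)
  have qq: "a*a - b1*b1 - b2*b2 = -2" using q inter_Bl[of 2 R R] by (simp add: sum12' a_def b1_def b2_def)
  have z: "0 \<le> (b1 - b2)*(b1 - b2)" by simp
  have e: "(b1 - b2)*(b1 - b2) = 2*(b1*b1 + b2*b2) - (b1+b2)*(b1+b2)" by (simp add: algebra_simps)
  have s: "b1 + b2 = -3*a" using l by linarith
  have e2: "(b1+b2)*(b1+b2) = 9*(a*a)" unfolding s by (simp add: algebra_simps)
  have e3: "b1*b1 + b2*b2 = a*a + 2" using qq by linarith
  have "0 \<le> 2*(a*a + 2) - 9*(a*a)" using z unfolding e e2 e3 .
  then have le: "7 * (a*a) \<le> 4" by (simp add: algebra_simps)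
  have "a = 0"
  proof (rule ccontr)
    assume "a \<noteq> 0" then have "0 < a*a" by (metis mult_eq_0_iff zero_le_square order_le_less)
    then show False using le by linarith
  qed
  then show ?thesis by (simp add: a_def)
qed

lemma roots1: "affine_roots (BlP2 1) = {}"
proof (rule ccontr)
  assume "affine_roots (BlP2 1) \<noteq> {}"
  then obtain r R c where "(r, R, c) \<in> affine_roots (BlP2 1)" by (metis ex_in_conv prod_cases3)
  then have d: "inter (BlP2 1) R (antiK (BlP2 1)) = 0" and q: "- inter (BlP2 1) R R = 2"
    by (auto simp: affine_roots_def KZ_iff kdeg_simp kchi_simp)
  define a where "a = R!0" define b where "b = R!1"
  have l: "3*a + b = 0" using d inter_antiK_Bl[of 1 R] by (simp add: a_def b_def)
  have qq: "a*a - b*b = -2" using q inter_Bl[of 1 R R] by (simp add: a_def b_def)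
  have s: "b = -3*a" using l by linarith
  have "b*b = 9*(a*a)" unfolding s by (simp add: algebra_simps)
  then have le: "4 * (a*a) = 1" using qq by linarith
  show False
  proof (cases "a = 0")
    case True then show False using le by simp
  next
    case False then have "0 < a*a" by (metis mult_eq_0_iff zero_le_square order_le_less)
    then show False using le by linarith
  qed
qed

lemma What2_shift: assumes "w \<in> What (BlP2 2)" shows "shift (BlP2 2) w 0"
  using assms unfolding What_def
proof (induct rule: generate.induct)
  case one then show ?case by (rule shift_one)
next
  case (incl h)
  then obtain a where a: "a \<in> affine_roots (BlP2 2)" "h = refl (BlP2 2) a" by blast
  obtain r R c where aa: "a = (r,R,c)" by (cases a)
  have A: "r = 0" "length R = 3" using a(1) aa by (auto simp: affine_roots_def KZ_iff)
  have R0: "R!0 = 0" using roots2 a(1) aa by blast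
  have "kD (h x) ! 0 = kD x ! 0" if x: "x \<in> KZ (BlP2 2)" for x
  proof -
    obtain s D e where xx: "x = (s,D,e)" "length D = 3" using x by (auto elim: KZ_E)
    show ?thesis using a(2) aa A R0 xx x by (simp add: refl_apply)
  qed
  then show ?case using refl_Ocar[OF a(1)] a(2) by (simp add: shift_def)
next
  case (inv h)
  then obtain a where a: "a \<in> affine_roots (BlP2 2)" "h = refl (BlP2 2) a" by blast
  obtain r R c where aa: "a = (r,R,c)" by (cases a)
  have A: "r = 0" "length R = 3" using a(1) aa by (auto simp: affine_roots_def KZ_iff)
  have R0: "R!0 = 0" using roots2 a(1) aa by blast
  have "kD (h x) ! 0 = kD x ! 0" if x: "x \<in> KZ (BlP2 2)" for x
  proof -
    obtain s D e where xx: "x = (s,D,e)" "length D = 3" using x by (auto elim: KZ_E)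
    show ?thesis using a(2) aa A R0 xx x by (simp add: refl_apply)
  qed
  then have "shift (BlP2 2) h 0" using refl_Ocar[OF a(1)] a(2) by (simp add: shift_def)
  then show ?case using shift_inv by fastforce
next
  case (eng h1 h2)
  then show ?case using shift_mult by fastforce
qed

lemma decomp:
  assumes m: "m \<le> 8" and g: "shift (BlP2 m) g 1" and f: "f \<in> Ocar (BlP2 m)"
  defines "k \<equiv> kD (f (kO (BlP2 m))) ! 0"
  shows "g [^]\<^bsub>BG (BlP2 m)\<^esub> (-k) \<otimes>\<^bsub>BG (BlP2 m)\<^esub> f \<in> What (BlP2 m)"
    "f = g [^]\<^bsub>BG (BlP2 m)\<^esub> k \<otimes>\<^bsub>BG (BlP2 m)\<^esub> (g [^]\<^bsub>BG (BlP2 m)\<^esub> (-k) \<otimes>\<^bsub>BG (BlP2 m)\<^esub> f)"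
proof -
  let ?G = "BG (BlP2 m)"
  have gp: "shift (BlP2 m) (g [^]\<^bsub>?G\<^esub> (-k)) (-k)" using shift_pow_int[OF g] .
  have gO: "g [^]\<^bsub>?G\<^esub> (-k) \<in> Ocar (BlP2 m)" using gp by (simp add: shift_def)
  have gB: "g \<in> carrier ?G" using g Ocar_D(1) by (auto simp: shift_def)
  have fB: "f \<in> carrier ?G" using Ocar_D(1)[OF f] by simp
  have f': "g [^]\<^bsub>?G\<^esub> (-k) \<otimes>\<^bsub>?G\<^esub> f \<in> Ocar (BlP2 m)" using subgroup.m_closed[OF Ocar_subgroup gO f] .
  have "(g [^]\<^bsub>?G\<^esub> (-k) \<otimes>\<^bsub>?G\<^esub> f) (kO (BlP2 m)) = (g [^]\<^bsub>?G\<^esub> (-k)) (f (kO (BlP2 m)))"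
    using Ocar_D(1)[OF gO] Ocar_D(1)[OF f] by (simp add: BG_mult_apply)
  moreover have "kD ((g [^]\<^bsub>?G\<^esub> (-k)) (f (kO (BlP2 m)))) ! 0 = 0"
    using gp Ocar_D(2)[OF f kO_KZ] Ocar_D(5)[OF f kO_KZ] kO_rk[of "BlP2 m"] by (simp add: shift_def k_def)
  ultimately show "g [^]\<^bsub>?G\<^esub> (-k) \<otimes>\<^bsub>?G\<^esub> f \<in> What (BlP2 m)"
    using reduce_shift0[OF m f'] by simp
  interpret G: group ?G by (rule grpBG)
  have "g [^]\<^bsub>?G\<^esub> k \<otimes>\<^bsub>?G\<^esub> (g [^]\<^bsub>?G\<^esub> (-k) \<otimes>\<^bsub>?G\<^esub> f) = (g [^]\<^bsub>?G\<^esub> k \<otimes>\<^bsub>?G\<^esub> g [^]\<^bsub>?G\<^esub> (-k)) \<otimes>\<^bsub>?G\<^esub> f"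
    using G.m_assoc[OF G.int_pow_closed[OF gB] G.int_pow_closed[OF gB] fB, of k "-k"] by simp
  also have "g [^]\<^bsub>?G\<^esub> k \<otimes>\<^bsub>?G\<^esub> g [^]\<^bsub>?G\<^esub> (-k) = g [^]\<^bsub>?G\<^esub> (k + -k)"
    using G.int_pow_mult[OF gB, of k "-k", symmetric] by simp
  finally show "f = g [^]\<^bsub>?G\<^esub> k \<otimes>\<^bsub>?G\<^esub> (g [^]\<^bsub>?G\<^esub> (-k) \<otimes>\<^bsub>?G\<^esub> f)" using fB by simp
qed

lemma part_ii:
  "What (BlP2 2) \<lhd> OGrp (BlP2 2) \<and>
   (\<exists>g\<in>Ocar (BlP2 2). (\<forall>n::nat. n > 0 \<longrightarrow> g [^]\<^bsub>BG (BlP2 2)\<^esub> n \<noteq> \<one>\<^bsub>BG (BlP2 2)\<^esub>) \<and>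
      What (BlP2 2) \<inter> generate (BG (BlP2 2)) {g} = {\<one>\<^bsub>BG (BlP2 2)\<^esub>} \<and>
      What (BlP2 2) <#>\<^bsub>BG (BlP2 2)\<^esub> generate (BG (BlP2 2)) {g} = Ocar (BlP2 2))"
proof -
  let ?Z = "BlP2 2" let ?G = "BG (BlP2 2)"
  interpret G: group ?G by (rule grpBG)
  define g where "g = tr ?Z [1,-3,0] (-4)"
  have sg: "shift ?Z g 1" using tr_shift[OF L2_facts] by (simp add: g_def)
  have gO: "g \<in> Ocar ?Z" using sg by (simp add: shift_def)
  have gB: "g \<in> carrier ?G" using Ocar_D(1)[OF gO] by simp
  have pos: "0 < picrk ?Z" by simp
  have A: "\<forall>n::nat. n > 0 \<longrightarrow> g [^]\<^bsub>?G\<^esub> n \<noteq> \<one>\<^bsub>?G\<^esub>"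
  proof (intro allI impI notI)
    fix n :: nat assume n: "n > 0" and e: "g [^]\<^bsub>?G\<^esub> n = \<one>\<^bsub>?G\<^esub>"
    have "shift ?Z (\<one>\<^bsub>?G\<^esub>) (int n)" using shift_pow_nat[OF sg, of n] e by simp
    then have "int n = 0" using shift_unique[OF _ shift_one pos] by blast
    then show False using n by simp
  qed
  have gen: "generate ?G {g} = {g [^]\<^bsub>?G\<^esub> (k::int) | k. k \<in> UNIV}" using G.generate_pow[OF gB] .
  have B: "What ?Z \<inter> generate ?G {g} = {\<one>\<^bsub>?G\<^esub>}"
  proof
    show "What ?Z \<inter> generate ?G {g} \<subseteq> {\<one>\<^bsub>?G\<^esub>}"
    proof
      fix x assume x: "x \<in> What ?Z \<inter> generate ?G {g}"
      then obtain k :: int where k: "x = g [^]\<^bsub>?G\<^esub> k" using gen by auto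
      have "shift ?Z x 0" using What2_shift x by blast
      moreover have "shift ?Z x k" using shift_pow_int[OF sg, of k] k by simp
      ultimately have "k = 0" using shift_unique[OF _ _ pos] by metis
      then show "x \<in> {\<one>\<^bsub>?G\<^esub>}" using k by simp
    qed
    show "{\<one>\<^bsub>?G\<^esub>} \<subseteq> What ?Z \<inter> generate ?G {g}"
      using subgroup.one_closed[OF What_subgroup] generate.one by auto
  qed
  have C: "What ?Z <#>\<^bsub>?G\<^esub> generate ?G {g} = Ocar ?Z"
  proof
    show "What ?Z <#>\<^bsub>?G\<^esub> generate ?G {g} \<subseteq> Ocar ?Z"
    proof
      fix f assume "f \<in> What ?Z <#>\<^bsub>?G\<^esub> generate ?G {g}"
      then obtain h x where hx: "h \<in> What ?Z" "x \<in> generate ?G {g}" "f = h \<otimes>\<^bsub>?G\<^esub> x"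
        unfolding set_mult_def by blast
      obtain k :: int where k: "x = g [^]\<^bsub>?G\<^esub> k" using hx(2) gen by auto
      have "x \<in> Ocar ?Z" using G.subgroup_int_pow_closed[OF Ocar_subgroup gO] k by simp
      moreover have "h \<in> Ocar ?Z" using hx(1) What_sub_Ocar by blast
      ultimately show "f \<in> Ocar ?Z" using subgroup.m_closed[OF Ocar_subgroup] hx(3) by blast
    qed
    show "Ocar ?Z \<subseteq> What ?Z <#>\<^bsub>?G\<^esub> generate ?G {g}"
    proof
      fix f assume f: "f \<in> Ocar ?Z"
      define k where "k = kD (f (kO ?Z)) ! 0"
      define f' where "f' = g [^]\<^bsub>?G\<^esub> (-k) \<otimes>\<^bsub>?G\<^esub> f"
      have f'W: "f' \<in> What ?Z" using decomp(1)[of 2 g f] sg f by (simp add: f'_def k_def)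
      have fe: "f = g [^]\<^bsub>?G\<^esub> k \<otimes>\<^bsub>?G\<^esub> f'" using decomp(2)[of 2 g f] sg f by (simp add: f'_def k_def)
      have gkO: "g [^]\<^bsub>?G\<^esub> k \<in> Ocar ?Z" using G.subgroup_int_pow_closed[OF Ocar_subgroup gO] by simp
      have gkB: "g [^]\<^bsub>?G\<^esub> k \<in> carrier ?G" using G.int_pow_closed[OF gB] .
      have f'B: "f' \<in> carrier ?G" using f'W What_Bij by simp
      have invO: "inv\<^bsub>OGrp ?Z\<^esub> (g [^]\<^bsub>?G\<^esub> k) = inv\<^bsub>?G\<^esub> (g [^]\<^bsub>?G\<^esub> k)"
        using G.m_inv_consistent[OF Ocar_subgroup gkO] by (simp add: OGrp_def)
      have "g [^]\<^bsub>?G\<^esub> k \<otimes>\<^bsub>OGrp ?Z\<^esub> f' \<otimes>\<^bsub>OGrp ?Z\<^esub> inv\<^bsub>OGrp ?Z\<^esub> (g [^]\<^bsub>?G\<^esub> k) \<in> What ?Z"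
        using normal.inv_op_closed2[OF What_normal[of "BlP2 2"], of "g [^]\<^bsub>?G\<^esub> k" f'] gkO f'W by simp
      then have cW: "g [^]\<^bsub>?G\<^esub> k \<otimes>\<^bsub>?G\<^esub> f' \<otimes>\<^bsub>?G\<^esub> inv\<^bsub>?G\<^esub> (g [^]\<^bsub>?G\<^esub> k) \<in> What ?Z"
        using invO by simp
      have "(g [^]\<^bsub>?G\<^esub> k \<otimes>\<^bsub>?G\<^esub> f' \<otimes>\<^bsub>?G\<^esub> inv\<^bsub>?G\<^esub> (g [^]\<^bsub>?G\<^esub> k)) \<otimes>\<^bsub>?G\<^esub> g [^]\<^bsub>?G\<^esub> k = f"
        using G.m_assoc[OF G.m_closed[OF gkB f'B] G.inv_closed[OF gkB] gkB] G.l_inv[OF gkB]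
          G.r_one[OF G.m_closed[OF gkB f'B]] fe by simp
      moreover have "g [^]\<^bsub>?G\<^esub> k \<in> generate ?G {g}" using gen by auto
      ultimately show "f \<in> What ?Z <#>\<^bsub>?G\<^esub> generate ?G {g}"
        using cW unfolding set_mult_def by force
    qed
  qed
  show ?thesis using What_normal A B C gO by blast
qed

lemma part_iii: "What (BlP2 1) = {\<one>\<^bsub>BG (BlP2 1)\<^esub>} \<and> OGrp (BlP2 1) \<cong> integer_group"
proof -
  let ?Z = "BlP2 1" let ?G = "BG (BlP2 1)"
  interpret G: group ?G by (rule grpBG)
  have W: "What ?Z = {\<one>\<^bsub>?G\<^esub>}" unfolding What_def roots1 using G.generate_empty by simp
  define g where "g = tr ?Z [1,-3] (-4)"
  have sg: "shift ?Z g 1" using tr_shift[OF L1_facts] by (simp add: g_def)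
  have gO: "g \<in> Ocar ?Z" using sg by (simp add: shift_def)
  have gB: "g \<in> carrier ?G" using Ocar_D(1)[OF gO] by simp
  define \<phi> where "\<phi> = (\<lambda>f. kD (f (kO ?Z)) ! 0)"
  have cA: "f = g [^]\<^bsub>?G\<^esub> (\<phi> f)" if f: "f \<in> Ocar ?Z" for f
  proof -
    have "g [^]\<^bsub>?G\<^esub> (- \<phi> f) \<otimes>\<^bsub>?G\<^esub> f = \<one>\<^bsub>?G\<^esub>" using decomp(1)[of 1 g f] sg f W by (simp add: \<phi>_def)
    moreover have "f = g [^]\<^bsub>?G\<^esub> (\<phi> f) \<otimes>\<^bsub>?G\<^esub> (g [^]\<^bsub>?G\<^esub> (- \<phi> f) \<otimes>\<^bsub>?G\<^esub> f)"
      using decomp(2)[of 1 g f] sg f by (simp add: \<phi>_def)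
    ultimately show ?thesis using G.r_one[OF G.int_pow_closed[OF gB], of "\<phi> f"] by simp
  qed
  have cB: "\<phi> (g [^]\<^bsub>?G\<^esub> k) = k" for k :: int
    using shift_pow_int[OF sg, of k] kO_KZ[of ?Z] by (simp add: shift_def \<phi>_def kO_D0 kO_rk)
  have pO: "g [^]\<^bsub>?G\<^esub> (k::int) \<in> Ocar ?Z" for k using G.subgroup_int_pow_closed[OF Ocar_subgroup gO] by simp
  have hom: "\<phi> \<in> hom (OGrp ?Z) integer_group"
  proof (rule homI)
    fix x y assume x: "x \<in> carrier (OGrp ?Z)" and y: "y \<in> carrier (OGrp ?Z)"
    have "x \<otimes>\<^bsub>OGrp ?Z\<^esub> y = g [^]\<^bsub>?G\<^esub> (\<phi> x) \<otimes>\<^bsub>?G\<^esub> g [^]\<^bsub>?G\<^esub> (\<phi> y)"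
      using cA x y by simp
    also have "\<dots> = g [^]\<^bsub>?G\<^esub> (\<phi> x + \<phi> y)" using G.int_pow_mult[OF gB] by simp
    finally show "\<phi> (x \<otimes>\<^bsub>OGrp ?Z\<^esub> y) = \<phi> x \<otimes>\<^bsub>integer_group\<^esub> \<phi> y" using cB by simp
  qed simp
  have bij: "bij_betw \<phi> (carrier (OGrp ?Z)) (carrier integer_group)"
  proof (rule bij_betwI')
    fix x y assume "x \<in> carrier (OGrp ?Z)" "y \<in> carrier (OGrp ?Z)"
    then show "(\<phi> x = \<phi> y) = (x = y)" using cA by (metis OGrp_simps(1))
  next
    fix x assume "x \<in> carrier (OGrp ?Z)" then show "\<phi> x \<in> carrier integer_group" by simp
  next
    fix k :: int assume "k \<in> carrier integer_group"
    then show "\<exists>x\<in>carrier (OGrp ?Z). k = \<phi> x" using cB pO by (metis OGrp_simps(1))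
  qed
  have "OGrp ?Z \<cong> integer_group" using hom bij by (intro is_isoI) (simp add: iso_def)
  then show ?thesis using W by simp
qed

theorem proposition3p15:
  assumes "delPezzo Z"
  shows "(Z \<noteq> BlP2 1 \<and> Z \<noteq> BlP2 2 \<longrightarrow> Ocar Z = What Z)
    \<and> (Z = BlP2 2 \<longrightarrow>
         What Z \<lhd> OGrp Z \<and>
         (\<exists>g\<in>Ocar Z. (\<forall>n::nat. n > 0 \<longrightarrow> g [^]\<^bsub>BG Z\<^esub> n \<noteq> \<one>\<^bsub>BG Z\<^esub>) \<and>
            What Z \<inter> generate (BG Z) {g} = {\<one>\<^bsub>BG Z\<^esub>} \<and>
            What Z <#>\<^bsub>BG Z\<^esub> generate (BG Z) {g} = Ocar Z))
    \<and> (Z = BlP2 1 \<longrightarrow> What Z = {\<one>\<^bsub>BG Z\<^esub>} \<and> OGrp Z \<cong> integer_group)"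
  proof -
  have 1: "Z \<noteq> BlP2 1 \<and> Z \<noteq> BlP2 2 \<longrightarrow> Ocar Z = What Z"
    using part_i[OF assms] by blast
  have 2: "Z = BlP2 2 \<longrightarrow>
         What Z \<lhd> OGrp Z \<and>
         (\<exists>g\<in>Ocar Z. (\<forall>n::nat. n > 0 \<longrightarrow> g [^]\<^bsub>BG Z\<^esub> n \<noteq> \<one>\<^bsub>BG Z\<^esub>) \<and>
            What Z \<inter> generate (BG Z) {g} = {\<one>\<^bsub>BG Z\<^esub>} \<and>
            What Z <#>\<^bsub>BG Z\<^esub> generate (BG Z) {g} = Ocar Z)"
  proof
    assume "Z = BlP2 2"
    then show "What Z \<lhd> OGrp Z \<and>
         (\<exists>g\<in>Ocar Z. (\<forall>n::nat. n > 0 \<longrightarrow> g [^]\<^bsub>BG Z\<^esub> n \<noteq> \<one>\<^bsub>BG Z\<^esub>) \<and>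
            What Z \<inter> generate (BG Z) {g} = {\<one>\<^bsub>BG Z\<^esub>} \<and>
            What Z <#>\<^bsub>BG Z\<^esub> generate (BG Z) {g} = Ocar Z)"
      using part_ii by simp
  qed
  have 3: "Z = BlP2 1 \<longrightarrow> What Z = {\<one>\<^bsub>BG Z\<^esub>} \<and> OGrp Z \<cong> integer_group"
  proof
    assume "Z = BlP2 1"
    then show "What Z = {\<one>\<^bsub>BG Z\<^esub>} \<and> OGrp Z \<cong> integer_group" using part_iii by simp
  qed
  show ?thesis using 1 2 3 by blast
qed

end
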